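(* Let $\mathbb{A}$ be a 2-category and $(\mathfrak{l}\dashv\mathfrak{p},\varepsilon,\eta):\mathfrak{b}\to\mathfrak{e}$ an adjunction in $\mathbb{A}$ (so $\mathfrak{l}:\mathfrak{b}\to\mathfrak{e}$, $\mathfrak{p}:\mathfrak{e}\to\mathfrak{b}$). Then: (1) if $\mathbb{A}$ has the two-dimensional cokernel diagram of $\mathfrak{p}$, the semantic lax descent factorization of $\mathfrak{p}$ is isomorphic to the usual factorization of $\mathfrak{p}$ through the Eilenberg–Moore object of the monad $(\mathfrak{b},\mathfrak{p}\mathfrak{l},\mathrm{id}_{\mathfrak{p}}\ast\varepsilon\ast\mathrm{id}_{\mathfrak{l}},\eta)$, either one existing if the other does; (2) if $\mathbb{A}$ has the two-dimensional kernel diagram of $\mathfrak{l}$, the semantic lax codescent factorization of $\mathfrak{l}$ is isomorphic to the usual factorization of $\mathfrak{l}$ through the Kleisli object of that monad, either one existing if the other does; (3) if $\mathbb{A}$ has the two-dimensional cokernel diagram of $\mathfrak{l}$, the semantic lax descent factorization of $\mathfrak{l}$ is isomorphic to the usual factorization of $\mathfrak{l}$ through the co-Eilenberg–Moore object of the comonad $(\mathfrak{e},\mathfrak{l}\mathfrak{p},\mathrm{id}_{\mathfrak{l}}\ast\eta\ast\mathrm{id}_{\mathfrak{p}},\varepsilon)$, either one existing if the other does; (4) if $\mathbb{A}$ has the two-dimensional kernel diagram of $\mathfrak{p}$, the semantic lax codescent factorization of $\mathfrak{p}$ is isomorphic to the usual factorization of $\mathfrak{p}$ through the co-Kleisli object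 of that comonad, either one existing if the other does.
   Context: A 2-category is a $\mathbf{Cat}$-enriched category; composition of 1-cells is juxtaposition, vertical composition of 2-cells is $\cdot$, horizontal composition is $\ast$, $\mathrm{id}_f$ is the identity 2-cell on $f$. An adjunction $(\mathfrak{l}\dashv\mathfrak{p},\varepsilon:\mathfrak{l}\mathfrak{p}\Rightarrow\mathrm{id}_{\mathfrak{e}},\eta:\mathrm{id}_{\mathfrak{b}}\Rightarrow\mathfrak{p}\mathfrak{l})$ satisfies the triangle identities. $\mathbb{A}^{\mathrm{op}}$, $\mathbb{A}^{\mathrm{co}}$, $\mathbb{A}^{\mathrm{coop}}$ are obtained from $\mathbb{A}$ by reversing 1-cells, 2-cells, or both. For a 1-cell $p:e\to b$: an opcomma object of $p$ along itself is $b\uparrow_p b$ with $\delta^0,\delta^1:b\to b\uparrow_pb$ and $\alpha:\delta^1p\Rightarrow\delta^0p$ such that for every $y$, $h\mapsto(h\delta^0,h\delta^1,\mathrm{id}_h\ast\alpha)$, $\xi\mapsto(\xi\ast\mathrm{id}_{\delta^0},\xi\ast\mathrm{id}_{\delta^1})$ is an isomorphism from $\mathbb{A}(b\uparrow_pb,y)$ onto the category of triples $(h_0,h_1:b\to y,\beta:h_1p\Rightarrow h_0p)$ with morphisms pairs $(\xi_0,\xi_1)$ with $(\xi_0\ast\mathrm{id}_p)\cdot\beta=\beta'\cdot(\xi_1\ast\mathrm{id}_p)$. A two-dimensional pushout of a span $f_0:c\to c_0$, $f_1:c\to c_1$ is $P$ with $q_0,q_1$, $q_0f_0=q_1f_1$,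 such that $k\mapsto(kq_0,kq_1)$ is an isomorphism from $\mathbb{A}(P,y)$ onto the category of pairs $(k_0,k_1)$ with $k_0f_0=k_1f_1$ and morphisms pairs of 2-cells $(\xi_0,\xi_1)$ with $\xi_0\ast\mathrm{id}_{f_0}=\xi_1\ast\mathrm{id}_{f_1}$. $\mathbb{A}$ has the two-dimensional cokernel diagram of $p$ if it has $b\uparrow_pb$ and a two-dimensional pushout $b\uparrow_pb\uparrow_pb$ of $(\delta^0,\delta^1)$ with $D^0,D^2$, $D^2\delta^0=D^0\delta^1$; $D^1$ is the unique 1-cell with $D^1\delta^1=D^2\delta^1$, $D^1\delta^0=D^0\delta^0$, $\mathrm{id}_{D^1}\ast\alpha=(\mathrm{id}_{D^0}\ast\alpha)\cdot(\mathrm{id}_{D^2}\ast\alpha)$; $s^0$ is the unique 1-cell with $s^0\delta^0=s^0\delta^1=\mathrm{id}_b$, $\mathrm{id}_{s^0}\ast\alpha=\mathrm{id}_p$. Semantic lax descent factorization of $p$: $\mathrm{Desc}_p(y)$ has objects $(h:y\to b,\beta:\delta^1h\Rightarrow\delta^0h)$ with $(\mathrm{id}_{D^0}\ast\beta)\cdot(\mathrm{id}_{D^2}\ast\beta)=\mathrm{id}_{D^1}\ast\beta$, $\mathrm{id}_{s^0}\ast\beta=\mathrm{id}_h$, and morphisms 2-cells $\xi:h_1\Rightarrow h_0$ with $\beta_0\cdot(\mathrm{id}_{\delta^1}\ast\xi)=(\mathrm{id}_{\delta^0}\ast\xi)\cdot\beta_1$; a lax descent object is $L$ with $d:L\to b$,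 $\Psi:\delta^1d\Rightarrow\delta^0d$ such that $g\mapsto(dg,\Psi\ast\mathrm{id}_g)$, $\xi\mapsto\mathrm{id}_d\ast\xi$ is an isomorphism $\mathbb{A}(y,L)\cong\mathrm{Desc}_p(y)$ for all $y$; the factorization is $p=d\,p^H$ with $p^H$ unique such that $dp^H=p$ and $\Psi\ast\mathrm{id}_{p^H}=\alpha$. An Eilenberg–Moore object of a monad $(b,t,m,\eta)$ is $b^{\mathsf{T}}$ with $u:b^{\mathsf{T}}\to b$, $\mu:tu\Rightarrow u$ such that $g\mapsto(ug,\mu\ast\mathrm{id}_g)$ is an isomorphism from $\mathbb{A}(y,b^{\mathsf{T}})$ onto the category of pairs $(h,\beta:th\Rightarrow h)$ with $\beta\cdot(\mathrm{id}_t\ast\beta)=\beta\cdot(m\ast\mathrm{id}_h)$, $\beta\cdot(\eta\ast\mathrm{id}_h)=\mathrm{id}_h$ (morphisms $\xi$ with $\xi\cdot\beta_1=\beta_0\cdot(\mathrm{id}_t\ast\xi)$). The usual factorization of the right adjoint $\mathfrak{p}$ through the Eilenberg–Moore object of the induced monad is $\mathfrak{p}=u\,k$ with $k:\mathfrak{e}\to\mathfrak{b}^{\mathsf{T}}$ unique such that $uk=\mathfrak{p}$ and $\mu\ast\mathrm{id}_k=\mathrm{id}_{\mathfrak{p}}\ast\varepsilon$. Duals: the two-dimensional kernel diagram of a 1-cell in $\mathbb{A}$ is its two-dimensional cokernel diagram in $\mathbb{A}^{\mathrm{op}}$, and its semantic lax codescent factorization is its semantic lax descent factorization in $\mathbb{A}^{\mathrm{op}}$.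 The usual factorization of $\mathfrak{l}$ through the Kleisli object, of $\mathfrak{l}$ through the co-Eilenberg–Moore object, and of $\mathfrak{p}$ through the co-Kleisli object are respectively the usual Eilenberg–Moore factorization of the right adjoint $\mathfrak{l}$ in $\mathbb{A}^{\mathrm{op}}$, of the right adjoint $\mathfrak{l}$ in $\mathbb{A}^{\mathrm{co}}$, and of the right adjoint $\mathfrak{p}$ in $\mathbb{A}^{\mathrm{coop}}$. Two factorizations $f=ac$ (through $X$) and $f=a'c'$ (through $X'$) are isomorphic if there is an isomorphism $\varphi:X\to X'$ with $a'\varphi=a$ and $\varphi c=c'$. *)

theory Defs
  imports Main
begin

section \<open>Strict 2-categories (Cat-enriched categories)\<close>

text \<open>
  Objects of type 'o, 1-cells of type 'a, 2-cells of type 'c.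
  cmp g f is the composite "g f" (f first); vc beta alpha is the vertical composite
  beta . alpha (alpha first); hc beta alpha is the horizontal composite beta * alpha,
  where for alpha : f => f' and beta : g => g' one has beta * alpha : g f => g' f'.
  id2 f is the identity 2-cell on the 1-cell f.
\<close>

record ('o, 'a, 'c) twocat =
  Ob  :: "'o set"
  Ar  :: "'a set"
  Cl  :: "'c set"
  dm  :: "'a \<Rightarrow> 'o"
  cd  :: "'a \<Rightarrow> 'o"
  cmp :: "'a \<Rightarrow> 'a \<Rightarrow> 'a"
  idn :: "'o \<Rightarrow> 'a"
  s2  :: "'c \<Rightarrow> 'a"
  t2  :: "'c \<Rightarrow> 'a"
  vc  :: "'c \<Rightarrow> 'c \<Rightarrow> 'c"
  hc  :: "'c \<Rightarrow> 'c \<Rightarrow> 'c"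
  id2 :: "'a \<Rightarrow> 'c"

definition hom :: "('o, 'a, 'c) twocat \<Rightarrow> 'o \<Rightarrow> 'o \<Rightarrow> 'a set" where
  "hom A x y = {f \<in> Ar A. dm A f = x \<and> cd A f = y}"

definition cells :: "('o, 'a, 'c) twocat \<Rightarrow> 'a \<Rightarrow> 'a \<Rightarrow> 'c set" where
  "cells A f g = {\<alpha> \<in> Cl A. s2 A \<alpha> = f \<and> t2 A \<alpha> = g}"

definition twocat :: "('o, 'a, 'c) twocat \<Rightarrow> bool" where
  "twocat A \<longleftrightarrow>
     (\<forall>f \<in> Ar A. dm A f \<in> Ob A \<and> cd A f \<in> Ob A)
   \<and> (\<forall>x \<in> Ob A. idn A x \<in> hom A x x)
   \<and> (\<forall>f \<in> Ar A. \<forall>g \<in> Ar A. dm A g = cd A f \<longrightarrow> cmp A g f \<in> hom A (dm A f) (cd A g))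
   \<and> (\<forall>f \<in> Ar A. \<forall>g \<in> Ar A. \<forall>h \<in> Ar A. dm A g = cd A f \<and> dm A h = cd A g \<longrightarrow>
        cmp A h (cmp A g f) = cmp A (cmp A h g) f)
   \<and> (\<forall>f \<in> Ar A. cmp A (idn A (cd A f)) f = f \<and> cmp A f (idn A (dm A f)) = f)
   \<and> (\<forall>\<alpha> \<in> Cl A. s2 A \<alpha> \<in> Ar A \<and> t2 A \<alpha> \<in> Ar A
        \<and> dm A (s2 A \<alpha>) = dm A (t2 A \<alpha>) \<and> cd A (s2 A \<alpha>) = cd A (t2 A \<alpha>))
   \<and> (\<forall>f \<in> Ar A. id2 A f \<in> cells A f f)
   \<and> (\<forall>\<alpha> \<in> Cl A. \<forall>\<beta> \<in> Cl A. s2 A \<beta> = t2 A \<alpha> \<longrightarrow> vc A \<beta> \<alpha> \<in> cells A (s2 A \<alpha>) (t2 A \<beta>))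
   \<and> (\<forall>\<alpha> \<in> Cl A. \<forall>\<beta> \<in> Cl A. \<forall>\<gamma> \<in> Cl A. s2 A \<beta> = t2 A \<alpha> \<and> s2 A \<gamma> = t2 A \<beta> \<longrightarrow>
        vc A \<gamma> (vc A \<beta> \<alpha>) = vc A (vc A \<gamma> \<beta>) \<alpha>)
   \<and> (\<forall>\<alpha> \<in> Cl A. vc A (id2 A (t2 A \<alpha>)) \<alpha> = \<alpha> \<and> vc A \<alpha> (id2 A (s2 A \<alpha>)) = \<alpha>)
   \<and> (\<forall>\<alpha> \<in> Cl A. \<forall>\<beta> \<in> Cl A. dm A (s2 A \<beta>) = cd A (s2 A \<alpha>) \<longrightarrow>
        hc A \<beta> \<alpha> \<in> cells A (cmp A (s2 A \<beta>) (s2 A \<alpha>)) (cmp A (t2 A \<beta>) (t2 A \<alpha>)))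
   \<and> (\<forall>\<alpha> \<in> Cl A. \<forall>\<beta> \<in> Cl A. \<forall>\<gamma> \<in> Cl A.
        dm A (s2 A \<beta>) = cd A (s2 A \<alpha>) \<and> dm A (s2 A \<gamma>) = cd A (s2 A \<beta>) \<longrightarrow>
        hc A \<gamma> (hc A \<beta> \<alpha>) = hc A (hc A \<gamma> \<beta>) \<alpha>)
   \<and> (\<forall>\<alpha> \<in> Cl A. hc A (id2 A (idn A (cd A (s2 A \<alpha>)))) \<alpha> = \<alpha>
        \<and> hc A \<alpha> (id2 A (idn A (dm A (s2 A \<alpha>)))) = \<alpha>)
   \<and> (\<forall>f \<in> Ar A. \<forall>g \<in> Ar A. dm A g = cd A f \<longrightarrow>
        hc A (id2 A g) (id2 A f) = id2 A (cmp A g f))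
   \<and> (\<forall>\<alpha> \<in> Cl A. \<forall>\<alpha>' \<in> Cl A. \<forall>\<beta> \<in> Cl A. \<forall>\<beta>' \<in> Cl A.
        s2 A \<alpha>' = t2 A \<alpha> \<and> s2 A \<beta>' = t2 A \<beta> \<and> dm A (s2 A \<beta>) = cd A (s2 A \<alpha>) \<longrightarrow>
        hc A (vc A \<beta>' \<beta>) (vc A \<alpha>' \<alpha>) = vc A (hc A \<beta>' \<alpha>') (hc A \<beta> \<alpha>))"

definition op2 :: "('o, 'a, 'c) twocat \<Rightarrow> ('o, 'a, 'c) twocat" where
  "op2 A = A\<lparr>dm := cd A, cd := dm A, cmp := (\<lambda>g f. cmp A f g),
             hc := (\<lambda>\<beta> \<alpha>. hc A \<alpha> \<beta>)\<rparr>"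

definition co2 :: "('o, 'a, 'c) twocat \<Rightarrow> ('o, 'a, 'c) twocat" where
  "co2 A = A\<lparr>s2 := t2 A, t2 := s2 A, vc := (\<lambda>\<beta> \<alpha>. vc A \<alpha> \<beta>)\<rparr>"

definition coop2 :: "('o, 'a, 'c) twocat \<Rightarrow> ('o, 'a, 'c) twocat" where
  "coop2 A = op2 (co2 A)"

text \<open>Given categories (O1,H1,c1,i1) and (O2,H2,c2,i2), where H x x' is the set of
  morphisms x -> x', c m' m is "m' after m" and i x the identity, the assignment
  (F on objects, G on morphisms) is a functor that is an isomorphism of categories.\<close>
definition cat_iso ::
  "'x set \<Rightarrow> ('x \<Rightarrow> 'x \<Rightarrow> 'm set) \<Rightarrow> ('m \<Rightarrow> 'm \<Rightarrow> 'm) \<Rightarrow> ('x \<Rightarrow> 'm) \<Rightarrow>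
   'y set \<Rightarrow> ('y \<Rightarrow> 'y \<Rightarrow> 'n set) \<Rightarrow> ('n \<Rightarrow> 'n \<Rightarrow> 'n) \<Rightarrow> ('y \<Rightarrow> 'n) \<Rightarrow>
   ('x \<Rightarrow> 'y) \<Rightarrow> ('m \<Rightarrow> 'n) \<Rightarrow> bool" where
  "cat_iso O1 H1 c1 i1 O2 H2 c2 i2 F G \<longleftrightarrow>
     bij_betw F O1 O2
   \<and> (\<forall>x \<in> O1. \<forall>x' \<in> O1. bij_betw G (H1 x x') (H2 (F x) (F x')))
   \<and> (\<forall>x \<in> O1. G (i1 x) = i2 (F x))
   \<and> (\<forall>x \<in> O1. \<forall>x' \<in> O1. \<forall>x'' \<in> O1. \<forall>m \<in> H1 x x'. \<forall>m' \<in> H1 x' x''.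
        G (c1 m' m) = c2 (G m') (G m))"

definition is_adjunction ::
  "('o, 'a, 'c) twocat \<Rightarrow> 'o \<Rightarrow> 'o \<Rightarrow> 'a \<Rightarrow> 'a \<Rightarrow> 'c \<Rightarrow> 'c \<Rightarrow> bool" where
  "is_adjunction A b e l p \<epsilon> \<eta> \<longleftrightarrow>
     b \<in> Ob A \<and> e \<in> Ob A \<and> l \<in> hom A b e \<and> p \<in> hom A e b
   \<and> \<epsilon> \<in> cells A (cmp A l p) (idn A e) \<and> \<eta> \<in> cells A (idn A b) (cmp A p l)
   \<and> vc A (hc A \<epsilon> (id2 A l)) (hc A (id2 A l) \<eta>) = id2 A l
   \<and> vc A (hc A (id2 A p) \<epsilon>) (hc A \<eta> (id2 A p)) = id2 A p"

definition oc_obj :: "('o, 'a, 'c) twocat \<Rightarrow> 'a \<Rightarrow> 'o \<Rightarrow> ('a \<times> 'a \<times> 'c) set" where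
  "oc_obj A p y = {(h0, h1, \<beta>). h0 \<in> hom A (cd A p) y \<and> h1 \<in> hom A (cd A p) y
                     \<and> \<beta> \<in> cells A (cmp A h1 p) (cmp A h0 p)}"

definition oc_hom :: "('o, 'a, 'c) twocat \<Rightarrow> 'a \<Rightarrow> ('a \<times> 'a \<times> 'c) \<Rightarrow> ('a \<times> 'a \<times> 'c) \<Rightarrow> ('c \<times> 'c) set" where
  "oc_hom A p X X' = (case X of (h0, h1, \<beta>) \<Rightarrow> case X' of (h0', h1', \<beta>') \<Rightarrow>
     {(\<xi>0, \<xi>1). \<xi>0 \<in> cells A h0 h0' \<and> \<xi>1 \<in> cells A h1 h1'
        \<and> vc A (hc A \<xi>0 (id2 A p)) \<beta> = vc A \<beta>' (hc A \<xi>1 (id2 A p))})"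

definition pair_vc :: "('o, 'a, 'c) twocat \<Rightarrow> ('c \<times> 'c) \<Rightarrow> ('c \<times> 'c) \<Rightarrow> ('c \<times> 'c)" where
  "pair_vc A m' m = (vc A (fst m') (fst m), vc A (snd m') (snd m))"

definition is_opcomma :: "('o, 'a, 'c) twocat \<Rightarrow> 'a \<Rightarrow> 'o \<Rightarrow> 'a \<Rightarrow> 'a \<Rightarrow> 'c \<Rightarrow> bool" where
  "is_opcomma A p C \<delta>0 \<delta>1 \<alpha> \<longleftrightarrow>
     p \<in> Ar A \<and> C \<in> Ob A \<and> \<delta>0 \<in> hom A (cd A p) C \<and> \<delta>1 \<in> hom A (cd A p) C
   \<and> \<alpha> \<in> cells A (cmp A \<delta>1 p) (cmp A \<delta>0 p)
   \<and> (\<forall>y \<in> Ob A. cat_iso (hom A C y) (cells A) (vc A) (id2 A)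
        (oc_obj A p y) (oc_hom A p) (pair_vc A) (\<lambda>(h0, h1, \<beta>). (id2 A h0, id2 A h1))
        (\<lambda>h. (cmp A h \<delta>0, cmp A h \<delta>1, hc A (id2 A h) \<alpha>))
        (\<lambda>\<xi>. (hc A \<xi> (id2 A \<delta>0), hc A \<xi> (id2 A \<delta>1))))"

definition po_obj :: "('o, 'a, 'c) twocat \<Rightarrow> 'a \<Rightarrow> 'a \<Rightarrow> 'o \<Rightarrow> ('a \<times> 'a) set" where
  "po_obj A f0 f1 y = {(k0, k1). k0 \<in> hom A (cd A f0) y \<and> k1 \<in> hom A (cd A f1) y
                          \<and> cmp A k0 f0 = cmp A k1 f1}"

definition po_hom :: "('o, 'a, 'c) twocat \<Rightarrow> 'a \<Rightarrow> 'a \<Rightarrow> ('a \<times> 'a) \<Rightarrow> ('a \<times> 'a) \<Rightarrow> ('c \<times> 'c) set" where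
  "po_hom A f0 f1 K K' = (case K of (k0, k1) \<Rightarrow> case K' of (k0', k1') \<Rightarrow>
     {(\<xi>0, \<xi>1). \<xi>0 \<in> cells A k0 k0' \<and> \<xi>1 \<in> cells A k1 k1'
        \<and> hc A \<xi>0 (id2 A f0) = hc A \<xi>1 (id2 A f1)})"

definition is_pushout2 :: "('o, 'a, 'c) twocat \<Rightarrow> 'a \<Rightarrow> 'a \<Rightarrow> 'o \<Rightarrow> 'a \<Rightarrow> 'a \<Rightarrow> bool" where
  "is_pushout2 A f0 f1 P q0 q1 \<longleftrightarrow>
     f0 \<in> Ar A \<and> f1 \<in> Ar A \<and> dm A f0 = dm A f1 \<and> P \<in> Ob A
   \<and> q0 \<in> hom A (cd A f0) P \<and> q1 \<in> hom A (cd A f1) P \<and> cmp A q0 f0 = cmp A q1 f1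
   \<and> (\<forall>y \<in> Ob A. cat_iso (hom A P y) (cells A) (vc A) (id2 A)
        (po_obj A f0 f1 y) (po_hom A f0 f1) (pair_vc A) (\<lambda>(k0, k1). (id2 A k0, id2 A k1))
        (\<lambda>k. (cmp A k q0, cmp A k q1))
        (\<lambda>\<xi>. (hc A \<xi> (id2 A q0), hc A \<xi> (id2 A q1))))"

record ('o, 'a, 'c) ckdiag =
  ck_C  :: 'o
  ck_d0 :: 'a
  ck_d1 :: 'a
  ck_al :: 'c
  ck_P  :: 'o
  ck_D0 :: 'a
  ck_D1 :: 'a
  ck_D2 :: 'a
  ck_s0 :: 'a

definition is_cokernel_diagram :: "('o, 'a, 'c) twocat \<Rightarrow> 'a \<Rightarrow> ('o, 'a, 'c) ckdiag \<Rightarrow> bool" where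
  "is_cokernel_diagram A p K \<longleftrightarrow>
     is_opcomma A p (ck_C K) (ck_d0 K) (ck_d1 K) (ck_al K)
   \<and> is_pushout2 A (ck_d0 K) (ck_d1 K) (ck_P K) (ck_D2 K) (ck_D0 K)
   \<and> ck_D1 K \<in> hom A (ck_C K) (ck_P K)
   \<and> cmp A (ck_D1 K) (ck_d1 K) = cmp A (ck_D2 K) (ck_d1 K)
   \<and> cmp A (ck_D1 K) (ck_d0 K) = cmp A (ck_D0 K) (ck_d0 K)
   \<and> hc A (id2 A (ck_D1 K)) (ck_al K)
       = vc A (hc A (id2 A (ck_D0 K)) (ck_al K)) (hc A (id2 A (ck_D2 K)) (ck_al K))
   \<and> ck_s0 K \<in> hom A (ck_C K) (cd A p)
   \<and> cmp A (ck_s0 K) (ck_d0 K) = idn A (cd A p)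
   \<and> cmp A (ck_s0 K) (ck_d1 K) = idn A (cd A p)
   \<and> hc A (id2 A (ck_s0 K)) (ck_al K) = id2 A p"

definition desc_obj :: "('o, 'a, 'c) twocat \<Rightarrow> 'a \<Rightarrow> ('o, 'a, 'c) ckdiag \<Rightarrow> 'o \<Rightarrow> ('a \<times> 'c) set" where
  "desc_obj A p K y = {(h, \<beta>). h \<in> hom A y (cd A p)
      \<and> \<beta> \<in> cells A (cmp A (ck_d1 K) h) (cmp A (ck_d0 K) h)
      \<and> vc A (hc A (id2 A (ck_D0 K)) \<beta>) (hc A (id2 A (ck_D2 K)) \<beta>) = hc A (id2 A (ck_D1 K)) \<beta>
      \<and> hc A (id2 A (ck_s0 K)) \<beta> = id2 A h}"

definition desc_hom :: "('o, 'a, 'c) twocat \<Rightarrow> ('o, 'a, 'c) ckdiag \<Rightarrow> ('a \<times> 'c) \<Rightarrow> ('a \<times> 'c) \<Rightarrow> 'c set" where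
  "desc_hom A K X1 X0 = (case X1 of (h1, \<beta>1) \<Rightarrow> case X0 of (h0, \<beta>0) \<Rightarrow>
     {\<xi> \<in> cells A h1 h0. vc A \<beta>0 (hc A (id2 A (ck_d1 K)) \<xi>) = vc A (hc A (id2 A (ck_d0 K)) \<xi>) \<beta>1})"

definition is_lax_descent_object ::
  "('o, 'a, 'c) twocat \<Rightarrow> 'a \<Rightarrow> ('o, 'a, 'c) ckdiag \<Rightarrow> 'o \<Rightarrow> 'a \<Rightarrow> 'c \<Rightarrow> bool" where
  "is_lax_descent_object A p K L d \<Psi> \<longleftrightarrow>
     L \<in> Ob A \<and> d \<in> hom A L (cd A p)
   \<and> \<Psi> \<in> cells A (cmp A (ck_d1 K) d) (cmp A (ck_d0 K) d)
   \<and> (\<forall>y \<in> Ob A. cat_iso (hom A y L) (cells A) (vc A) (id2 A)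
        (desc_obj A p K y) (desc_hom A K) (vc A) (\<lambda>(h, \<beta>). id2 A h)
        (\<lambda>g. (cmp A d g, hc A \<Psi> (id2 A g)))
        (\<lambda>\<xi>. hc A (id2 A d) \<xi>))"

definition is_lax_descent_factorization ::
  "('o, 'a, 'c) twocat \<Rightarrow> 'a \<Rightarrow> ('o, 'a, 'c) ckdiag \<Rightarrow> 'o \<Rightarrow> 'a \<Rightarrow> 'c \<Rightarrow> 'a \<Rightarrow> bool" where
  "is_lax_descent_factorization A p K L d \<Psi> pH \<longleftrightarrow>
     is_lax_descent_object A p K L d \<Psi>
   \<and> pH \<in> hom A (dm A p) L \<and> cmp A d pH = p \<and> hc A \<Psi> (id2 A pH) = ck_al K"

definition em_obj :: "('o, 'a, 'c) twocat \<Rightarrow> 'a \<Rightarrow> 'c \<Rightarrow> 'c \<Rightarrow> 'o \<Rightarrow> ('a \<times> 'c) set" where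
  "em_obj A t m \<eta> y = {(h, \<beta>). h \<in> hom A y (dm A t) \<and> \<beta> \<in> cells A (cmp A t h) h
      \<and> vc A \<beta> (hc A (id2 A t) \<beta>) = vc A \<beta> (hc A m (id2 A h))
      \<and> vc A \<beta> (hc A \<eta> (id2 A h)) = id2 A h}"

definition em_hom :: "('o, 'a, 'c) twocat \<Rightarrow> 'a \<Rightarrow> ('a \<times> 'c) \<Rightarrow> ('a \<times> 'c) \<Rightarrow> 'c set" where
  "em_hom A t X1 X0 = (case X1 of (h1, \<beta>1) \<Rightarrow> case X0 of (h0, \<beta>0) \<Rightarrow>
     {\<xi> \<in> cells A h1 h0. vc A \<xi> \<beta>1 = vc A \<beta>0 (hc A (id2 A t) \<xi>)})"

definition is_EM_object ::
  "('o, 'a, 'c) twocat \<Rightarrow> 'a \<Rightarrow> 'c \<Rightarrow> 'c \<Rightarrow> 'o \<Rightarrow> 'a \<Rightarrow> 'c \<Rightarrow> bool" where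
  "is_EM_object A t m \<eta> X u \<mu> \<longleftrightarrow>
     X \<in> Ob A \<and> u \<in> hom A X (dm A t) \<and> \<mu> \<in> cells A (cmp A t u) u
   \<and> (\<forall>y \<in> Ob A. cat_iso (hom A y X) (cells A) (vc A) (id2 A)
        (em_obj A t m \<eta> y) (em_hom A t) (vc A) (\<lambda>(h, \<beta>). id2 A h)
        (\<lambda>g. (cmp A u g, hc A \<mu> (id2 A g)))
        (\<lambda>\<xi>. hc A (id2 A u) \<xi>))"

definition is_EM_factorization ::
  "('o, 'a, 'c) twocat \<Rightarrow> 'a \<Rightarrow> 'a \<Rightarrow> 'c \<Rightarrow> 'c \<Rightarrow> 'o \<Rightarrow> 'a \<Rightarrow> 'c \<Rightarrow> 'a \<Rightarrow> bool" where
  "is_EM_factorization A l p \<epsilon> \<eta> X u \<mu> k \<longleftrightarrow>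
     is_EM_object A (cmp A p l) (hc A (hc A (id2 A p) \<epsilon>) (id2 A l)) \<eta> X u \<mu>
   \<and> k \<in> hom A (dm A p) X \<and> cmp A u k = p \<and> hc A \<mu> (id2 A k) = hc A (id2 A p) \<epsilon>"

definition iso_factorizations ::
  "('o, 'a, 'c) twocat \<Rightarrow> 'o \<Rightarrow> 'a \<Rightarrow> 'a \<Rightarrow> 'o \<Rightarrow> 'a \<Rightarrow> 'a \<Rightarrow> bool" where
  "iso_factorizations A X a c X' a' c' \<longleftrightarrow>
     (\<exists>\<phi> \<in> hom A X X'. (\<exists>\<psi> \<in> hom A X' X. cmp A \<psi> \<phi> = idn A X \<and> cmp A \<phi> \<psi> = idn A X')
        \<and> cmp A a' \<phi> = a \<and> cmp A \<phi> c = c')"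

text \<open>"The semantic lax descent factorization of p (computed in Bd w.r.t. the cokernel
  diagram K) is isomorphic to the usual Eilenberg--Moore factorization of the right adjoint p
  of the adjunction (l -| p, eps, eta) in Bm, either one existing if the other does."\<close>
definition desc_EM_agree ::
  "('o, 'a, 'c) twocat \<Rightarrow> ('o, 'a, 'c) twocat \<Rightarrow> 'a \<Rightarrow> 'a \<Rightarrow> 'c \<Rightarrow> 'c \<Rightarrow> ('o, 'a, 'c) ckdiag \<Rightarrow> bool" where
  "desc_EM_agree Bd Bm l p \<epsilon> \<eta> K \<longleftrightarrow>
     ((\<exists>L d \<Psi> pH. is_lax_descent_factorization Bd p K L d \<Psi> pH)
        \<longleftrightarrow> (\<exists>X u \<mu> k. is_EM_factorization Bm l p \<epsilon> \<eta> X u \<mu> k))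
   \<and> (\<forall>L d \<Psi> pH X u \<mu> k. is_lax_descent_factorization Bd p K L d \<Psi> pH \<longrightarrow>
        is_EM_factorization Bm l p \<epsilon> \<eta> X u \<mu> k \<longrightarrow> iso_factorizations Bd L d pH X u k)"

end

theory Submission
  imports Defs
begin


locale tc = fixes A :: "('o, 'a, 'c) twocat" assumes tc: "twocat A"
begin


lemmas TT = tc[unfolded twocat_def]
lemmas T1 = TT[THEN conjunct1]
lemmas T2 = TT[THEN conjunct2, THEN conjunct1]
lemmas T3 = TT[THEN conjunct2, THEN conjunct2, THEN conjunct1]
lemmas T4 = TT[THEN conjunct2, THEN conjunct2, THEN conjunct2, THEN conjunct1]
lemmas T5 = TT[THEN conjunct2, THEN conjunct2, THEN conjunct2, THEN conjunct2, THEN conjunct1]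
lemmas T6 = TT[THEN conjunct2, THEN conjunct2, THEN conjunct2, THEN conjunct2, THEN conjunct2, THEN conjunct1]
lemmas T7 = TT[THEN conjunct2, THEN conjunct2, THEN conjunct2, THEN conjunct2, THEN conjunct2, THEN conjunct2, THEN conjunct1]
lemmas T8 = TT[THEN conjunct2, THEN conjunct2, THEN conjunct2, THEN conjunct2, THEN conjunct2, THEN conjunct2, THEN conjunct2, THEN conjunct1]
lemmas T9 = TT[THEN conjunct2, THEN conjunct2, THEN conjunct2, THEN conjunct2, THEN conjunct2, THEN conjunct2, THEN conjunct2, THEN conjunct2, THEN conjunct1]
lemmas T10 = TT[THEN conjunct2, THEN conjunct2, THEN conjunct2, THEN conjunct2, THEN conjunct2, THEN conjunct2, THEN conjunct2, THEN conjunct2, THEN conjunct2, THEN conjunct1]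
lemmas T11 = TT[THEN conjunct2, THEN conjunct2, THEN conjunct2, THEN conjunct2, THEN conjunct2, THEN conjunct2, THEN conjunct2, THEN conjunct2, THEN conjunct2, THEN conjunct2, THEN conjunct1]
lemmas T12 = TT[THEN conjunct2, THEN conjunct2, THEN conjunct2, THEN conjunct2, THEN conjunct2, THEN conjunct2, THEN conjunct2, THEN conjunct2, THEN conjunct2, THEN conjunct2, THEN conjunct2, THEN conjunct1]
lemmas T13 = TT[THEN conjunct2, THEN conjunct2, THEN conjunct2, THEN conjunct2, THEN conjunct2, THEN conjunct2, THEN conjunct2, THEN conjunct2, THEN conjunct2, THEN conjunct2, THEN conjunct2, THEN conjunct2, THEN conjunct1]
lemmas T14 = TT[THEN conjunct2, THEN conjunct2, THEN conjunct2, THEN conjunct2, THEN conjunct2, THEN conjunct2, THEN conjunct2, THEN conjunct2, THEN conjunct2, THEN conjunct2, THEN conjunct2, THEN conjunct2, THEN conjunct2, THEN conjunct1]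
lemmas T15 = TT[THEN conjunct2, THEN conjunct2, THEN conjunct2, THEN conjunct2, THEN conjunct2, THEN conjunct2, THEN conjunct2, THEN conjunct2, THEN conjunct2, THEN conjunct2, THEN conjunct2, THEN conjunct2, THEN conjunct2, THEN conjunct2]

lemma Ar_Ob: "f \<in> Ar A \<Longrightarrow> dm A f \<in> Ob A" "f \<in> Ar A \<Longrightarrow> cd A f \<in> Ob A"
  using T1 by auto

lemma idn_Ar[simp]: "x \<in> Ob A \<Longrightarrow> idn A x \<in> Ar A"
  and dm_idn[simp]: "x \<in> Ob A \<Longrightarrow> dm A (idn A x) = x"
  and cd_idn[simp]: "x \<in> Ob A \<Longrightarrow> cd A (idn A x) = x"
  using T1 T2 T3 by (auto simp: hom_def)

lemma cmp_Ar[simp]: "f \<in> Ar A \<Longrightarrow> g \<in> Ar A \<Longrightarrow> dm A g = cd A f \<Longrightarrow> cmp A g f \<in> Ar A"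
  and dm_cmp[simp]: "f \<in> Ar A \<Longrightarrow> g \<in> Ar A \<Longrightarrow> dm A g = cd A f \<Longrightarrow> dm A (cmp A g f) = dm A f"
  and cd_cmp[simp]: "f \<in> Ar A \<Longrightarrow> g \<in> Ar A \<Longrightarrow> dm A g = cd A f \<Longrightarrow> cd A (cmp A g f) = cd A g"
  using T1 T2 T3 by (auto simp: hom_def)

lemma cmp_assoc[simp]: "f \<in> Ar A \<Longrightarrow> g \<in> Ar A \<Longrightarrow> h \<in> Ar A \<Longrightarrow> dm A g = cd A f \<Longrightarrow> dm A h = cd A g
   \<Longrightarrow> cmp A h (cmp A g f) = cmp A (cmp A h g) f"
  using T4 by blast

lemma cmp_idn_l[simp]: "f \<in> Ar A \<Longrightarrow> x = cd A f \<Longrightarrow> cmp A (idn A x) f = f"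
  and cmp_idn_r[simp]: "f \<in> Ar A \<Longrightarrow> x = dm A f \<Longrightarrow> cmp A f (idn A x) = f"
  using T5 by auto

lemma s2_Ar[simp]: "\<alpha> \<in> Cl A \<Longrightarrow> s2 A \<alpha> \<in> Ar A"
  and t2_Ar[simp]: "\<alpha> \<in> Cl A \<Longrightarrow> t2 A \<alpha> \<in> Ar A"
  and dm_t2[simp]: "\<alpha> \<in> Cl A \<Longrightarrow> dm A (t2 A \<alpha>) = dm A (s2 A \<alpha>)"
  and cd_t2[simp]: "\<alpha> \<in> Cl A \<Longrightarrow> cd A (t2 A \<alpha>) = cd A (s2 A \<alpha>)"
  using T6 by auto

lemma id2_Cl[simp]: "f \<in> Ar A \<Longrightarrow> id2 A f \<in> Cl A"
  and s2_id2[simp]: "f \<in> Ar A \<Longrightarrow> s2 A (id2 A f) = f"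
  and t2_id2[simp]: "f \<in> Ar A \<Longrightarrow> t2 A (id2 A f) = f"
  using T7 unfolding cells_def by auto

lemma vc_Cl[simp]: "\<alpha> \<in> Cl A \<Longrightarrow> \<beta> \<in> Cl A \<Longrightarrow> s2 A \<beta> = t2 A \<alpha> \<Longrightarrow> vc A \<beta> \<alpha> \<in> Cl A"
  and s2_vc[simp]: "\<alpha> \<in> Cl A \<Longrightarrow> \<beta> \<in> Cl A \<Longrightarrow> s2 A \<beta> = t2 A \<alpha> \<Longrightarrow> s2 A (vc A \<beta> \<alpha>) = s2 A \<alpha>"
  and t2_vc[simp]: "\<alpha> \<in> Cl A \<Longrightarrow> \<beta> \<in> Cl A \<Longrightarrow> s2 A \<beta> = t2 A \<alpha> \<Longrightarrow> t2 A (vc A \<beta> \<alpha>) = t2 A \<beta>"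
  using T8 unfolding cells_def by auto

lemma hc_Cl[simp]: "\<alpha> \<in> Cl A \<Longrightarrow> \<beta> \<in> Cl A \<Longrightarrow> dm A (s2 A \<beta>) = cd A (s2 A \<alpha>) \<Longrightarrow> hc A \<beta> \<alpha> \<in> Cl A"
  and s2_hc[simp]: "\<alpha> \<in> Cl A \<Longrightarrow> \<beta> \<in> Cl A \<Longrightarrow> dm A (s2 A \<beta>) = cd A (s2 A \<alpha>) \<Longrightarrow> s2 A (hc A \<beta> \<alpha>) = cmp A (s2 A \<beta>) (s2 A \<alpha>)"
  and t2_hc[simp]: "\<alpha> \<in> Cl A \<Longrightarrow> \<beta> \<in> Cl A \<Longrightarrow> dm A (s2 A \<beta>) = cd A (s2 A \<alpha>) \<Longrightarrow> t2 A (hc A \<beta> \<alpha>) = cmp A (t2 A \<beta>) (t2 A \<alpha>)"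
  using T11 unfolding cells_def by auto

lemma vc_assoc[simp]: "\<alpha> \<in> Cl A \<Longrightarrow> \<beta> \<in> Cl A \<Longrightarrow> \<gamma> \<in> Cl A \<Longrightarrow> s2 A \<beta> = t2 A \<alpha> \<Longrightarrow> s2 A \<gamma> = t2 A \<beta>
  \<Longrightarrow> vc A (vc A \<gamma> \<beta>) \<alpha> = vc A \<gamma> (vc A \<beta> \<alpha>)"
  using T9 by metis

lemma vc_id_l[simp]: "\<alpha> \<in> Cl A \<Longrightarrow> f = t2 A \<alpha> \<Longrightarrow> vc A (id2 A f) \<alpha> = \<alpha>"
  and vc_id_r[simp]: "\<alpha> \<in> Cl A \<Longrightarrow> f = s2 A \<alpha> \<Longrightarrow> vc A \<alpha> (id2 A f) = \<alpha>"
  using T10 by auto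

lemma hc_assoc[simp]: "\<alpha> \<in> Cl A \<Longrightarrow> \<beta> \<in> Cl A \<Longrightarrow> \<gamma> \<in> Cl A \<Longrightarrow> dm A (s2 A \<beta>) = cd A (s2 A \<alpha>)
  \<Longrightarrow> dm A (s2 A \<gamma>) = cd A (s2 A \<beta>) \<Longrightarrow> hc A \<gamma> (hc A \<beta> \<alpha>) = hc A (hc A \<gamma> \<beta>) \<alpha>"
  using T12 by metis

lemma hc_id2_id2[simp]: "f \<in> Ar A \<Longrightarrow> g \<in> Ar A \<Longrightarrow> dm A g = cd A f \<Longrightarrow> hc A (id2 A g) (id2 A f) = id2 A (cmp A g f)"
  using T14 by blast

lemma hc_idn_l[simp]: "\<alpha> \<in> Cl A \<Longrightarrow> x = cd A (s2 A \<alpha>) \<Longrightarrow> hc A (id2 A (idn A x)) \<alpha> = \<alpha>"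
  and hc_idn_r[simp]: "\<alpha> \<in> Cl A \<Longrightarrow> x = dm A (s2 A \<alpha>) \<Longrightarrow> hc A \<alpha> (id2 A (idn A x)) = \<alpha>"
  using T13 by auto

lemma interchange: "\<alpha> \<in> Cl A \<Longrightarrow> \<alpha>' \<in> Cl A \<Longrightarrow> \<beta> \<in> Cl A \<Longrightarrow> \<beta>' \<in> Cl A \<Longrightarrow>
  s2 A \<alpha>' = t2 A \<alpha> \<Longrightarrow> s2 A \<beta>' = t2 A \<beta> \<Longrightarrow> dm A (s2 A \<beta>) = cd A (s2 A \<alpha>) \<Longrightarrow>
  hc A (vc A \<beta>' \<beta>) (vc A \<alpha>' \<alpha>) = vc A (hc A \<beta>' \<alpha>') (hc A \<beta> \<alpha>)"
  using T15 by blast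

lemma hc_merge_r[simp]: "x \<in> Cl A \<Longrightarrow> f \<in> Ar A \<Longrightarrow> g \<in> Ar A \<Longrightarrow> dm A (s2 A x) = cd A f \<Longrightarrow> dm A f = cd A g
  \<Longrightarrow> hc A (hc A x (id2 A f)) (id2 A g) = hc A x (id2 A (cmp A f g))"
  by (subst hc_assoc[symmetric]) auto

lemma whisk_l_vc[simp]: "\<alpha> \<in> Cl A \<Longrightarrow> \<beta> \<in> Cl A \<Longrightarrow> s2 A \<beta> = t2 A \<alpha> \<Longrightarrow> g \<in> Ar A \<Longrightarrow> dm A g = cd A (s2 A \<alpha>)
  \<Longrightarrow> hc A (id2 A g) (vc A \<beta> \<alpha>) = vc A (hc A (id2 A g) \<beta>) (hc A (id2 A g) \<alpha>)"
  using interchange[of \<alpha> \<beta> "id2 A g" "id2 A g"] by simp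

lemma whisk_r_vc[simp]: "\<alpha> \<in> Cl A \<Longrightarrow> \<beta> \<in> Cl A \<Longrightarrow> s2 A \<beta> = t2 A \<alpha> \<Longrightarrow> f \<in> Ar A \<Longrightarrow> dm A (s2 A \<alpha>) = cd A f
  \<Longrightarrow> hc A (vc A \<beta> \<alpha>) (id2 A f) = vc A (hc A \<beta> (id2 A f)) (hc A \<alpha> (id2 A f))"
  using interchange[of "id2 A f" "id2 A f" \<alpha> \<beta>] by simp

lemma nat1: "\<alpha> \<in> Cl A \<Longrightarrow> \<beta> \<in> Cl A \<Longrightarrow> dm A (s2 A \<beta>) = cd A (s2 A \<alpha>) \<Longrightarrow>
  hc A \<beta> \<alpha> = vc A (hc A (id2 A (t2 A \<beta>)) \<alpha>) (hc A \<beta> (id2 A (s2 A \<alpha>)))"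
  using interchange[of "id2 A (s2 A \<alpha>)" \<alpha> \<beta> "id2 A (t2 A \<beta>)"] by simp

lemma nat2: "\<alpha> \<in> Cl A \<Longrightarrow> \<beta> \<in> Cl A \<Longrightarrow> dm A (s2 A \<beta>) = cd A (s2 A \<alpha>) \<Longrightarrow>
  hc A \<beta> \<alpha> = vc A (hc A \<beta> (id2 A (t2 A \<alpha>))) (hc A (id2 A (s2 A \<beta>)) \<alpha>)"
  using interchange[of \<alpha> "id2 A (t2 A \<alpha>)" "id2 A (s2 A \<beta>)" \<beta>] by simp

lemma natural: "\<alpha> \<in> Cl A \<Longrightarrow> \<beta> \<in> Cl A \<Longrightarrow> dm A (s2 A \<beta>) = cd A (s2 A \<alpha>) \<Longrightarrow>
  vc A (hc A (id2 A (t2 A \<beta>)) \<alpha>) (hc A \<beta> (id2 A (s2 A \<alpha>))) = vc A (hc A \<beta> (id2 A (t2 A \<alpha>))) (hc A (id2 A (s2 A \<beta>)) \<alpha>)"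
  using nat1 nat2 by metis

lemma vc_ctx: "vc A a b = c \<Longrightarrow> R \<in> Cl A \<Longrightarrow> a \<in> Cl A \<Longrightarrow> b \<in> Cl A \<Longrightarrow> s2 A a = t2 A b \<Longrightarrow> s2 A b = t2 A R
  \<Longrightarrow> vc A a (vc A b R) = vc A c R"
  by (metis vc_assoc)

lemma hom_D: "f \<in> hom A x y \<Longrightarrow> f \<in> Ar A \<and> dm A f = x \<and> cd A f = y"
  by (simp add: hom_def)
lemma cells_D: "\<alpha> \<in> cells A f g \<Longrightarrow> \<alpha> \<in> Cl A \<and> s2 A \<alpha> = f \<and> t2 A \<alpha> = g"
  by (simp add: cells_def)
lemma hom_I: "f \<in> Ar A \<Longrightarrow> dm A f = x \<Longrightarrow> cd A f = y \<Longrightarrow> f \<in> hom A x y"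
  by (simp add: hom_def)
lemma cells_I: "\<alpha> \<in> Cl A \<Longrightarrow> s2 A \<alpha> = f \<Longrightarrow> t2 A \<alpha> = g \<Longrightarrow> \<alpha> \<in> cells A f g"
  by (simp add: cells_def)

end


lemma ci_inj: "cat_iso O1 H1 c1 i1 O2 H2 c2 i2 F G \<Longrightarrow> x \<in> O1 \<Longrightarrow> x' \<in> O1 \<Longrightarrow> F x = F x' \<Longrightarrow> x = x'"
  unfolding cat_iso_def bij_betw_def inj_on_def by blast
lemma ci_surj: "cat_iso O1 H1 c1 i1 O2 H2 c2 i2 F G \<Longrightarrow> y \<in> O2 \<Longrightarrow> \<exists>x\<in>O1. F x = y"
  unfolding cat_iso_def bij_betw_def by blast
lemma ci_hom_inj: "cat_iso O1 H1 c1 i1 O2 H2 c2 i2 F G \<Longrightarrow> x \<in> O1 \<Longrightarrow> x' \<in> O1 \<Longrightarrow> n \<in> H1 x x'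
   \<Longrightarrow> n' \<in> H1 x x' \<Longrightarrow> G n = G n' \<Longrightarrow> n = n'"
  unfolding cat_iso_def bij_betw_def inj_on_def by blast
lemma ci_hom_in: "cat_iso O1 H1 c1 i1 O2 H2 c2 i2 F G \<Longrightarrow> x \<in> O1 \<Longrightarrow> x' \<in> O1 \<Longrightarrow> n \<in> H1 x x'
   \<Longrightarrow> G n \<in> H2 (F x) (F x')"
  unfolding cat_iso_def bij_betw_def by blast
lemma ci_in: "cat_iso O1 H1 c1 i1 O2 H2 c2 i2 F G \<Longrightarrow> x \<in> O1 \<Longrightarrow> F x \<in> O2"
  unfolding cat_iso_def bij_betw_def by blast
lemma ci_hom_surj: "cat_iso O1 H1 c1 i1 O2 H2 c2 i2 F G \<Longrightarrow> x \<in> O1 \<Longrightarrow> x' \<in> O1 \<Longrightarrow> m \<in> H2 (F x) (F x')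
   \<Longrightarrow> \<exists>n\<in>H1 x x'. G n = m"
  unfolding cat_iso_def bij_betw_def by (metis imageE)

lemma ci_transfer:
  assumes ci: "cat_iso O1 H1 c1 i1 O2 H2 c2 i2 F G"
    and bij: "bij_betw \<Phi> O2 O3"
    and H: "\<And>x x'. x \<in> O2 \<Longrightarrow> x' \<in> O2 \<Longrightarrow> H3 (\<Phi> x) (\<Phi> x') = H2 x x'"
    and I: "\<And>x. x \<in> O2 \<Longrightarrow> i3 (\<Phi> x) = i2 x"
    and F': "\<And>x. x \<in> O1 \<Longrightarrow> F' x = \<Phi> (F x)"
  shows "cat_iso O1 H1 c1 i1 O3 H3 c2 i3 F' G"
proof -
  have FO: "\<And>x. x \<in> O1 \<Longrightarrow> F x \<in> O2" using ci unfolding cat_iso_def bij_betw_def by blast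
  have b1: "bij_betw F O1 O2" using ci unfolding cat_iso_def by blast
  have "bij_betw (\<Phi> \<circ> F) O1 O3" using bij_betw_trans[OF b1 bij] .
  moreover have "bij_betw F' O1 O3 = bij_betw (\<Phi> \<circ> F) O1 O3"
    by (rule bij_betw_cong) (simp add: F')
  ultimately have "bij_betw F' O1 O3" by simp
  then show ?thesis using ci unfolding cat_iso_def
    by (simp add: F' FO H I)
qed



context tc begin

lemma whisk_r_ctx: "hc A x (id2 A f) = R \<Longrightarrow> x \<in> Cl A \<Longrightarrow> f \<in> Ar A \<Longrightarrow> g \<in> Ar A \<Longrightarrow> dm A (s2 A x) = cd A f
   \<Longrightarrow> dm A f = cd A g \<Longrightarrow> hc A x (id2 A (cmp A f g)) = hc A R (id2 A g)"
  by (metis hc_merge_r)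

lemma whisk_l_ctx: "hc A (id2 A f) x = R \<Longrightarrow> x \<in> Cl A \<Longrightarrow> f \<in> Ar A \<Longrightarrow> g \<in> Ar A \<Longrightarrow> dm A f = cd A (s2 A x)
   \<Longrightarrow> dm A g = cd A f \<Longrightarrow> hc A (id2 A (cmp A g f)) x = hc A (id2 A g) R"
  by (metis hc_assoc hc_id2_id2 id2_Cl s2_id2)

lemma cmp_ctx: "cmp A g f = h \<Longrightarrow> f \<in> Ar A \<Longrightarrow> g \<in> Ar A \<Longrightarrow> X \<in> Ar A \<Longrightarrow> dm A g = cd A f \<Longrightarrow> dm A X = cd A g
   \<Longrightarrow> cmp A (cmp A X g) f = cmp A X h"
  by (metis cmp_assoc)

lemma whisk_eq: "a = c \<Longrightarrow> hc A (hc A (id2 A g) a) (id2 A f) = hc A (hc A (id2 A g) c) (id2 A f)"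
  by simp

end

locale adjck = tc +
  fixes b e :: 'o and l p :: 'a and \<epsilon> \<eta> :: 'c and K :: "('o, 'a, 'c) ckdiag"
  assumes adj: "is_adjunction A b e l p \<epsilon> \<eta>"
    and ck: "is_cokernel_diagram A p K"
begin

abbreviation "C \<equiv> ck_C K"
abbreviation "d0 \<equiv> ck_d0 K"
abbreviation "d1 \<equiv> ck_d1 K"
abbreviation "al \<equiv> ck_al K"
abbreviation "P \<equiv> ck_P K"
abbreviation "D0 \<equiv> ck_D0 K"
abbreviation "D1 \<equiv> ck_D1 K"
abbreviation "D2 \<equiv> ck_D2 K"
abbreviation "s0 \<equiv> ck_s0 K"

lemma oc: "is_opcomma A p C d0 d1 al" and po: "is_pushout2 A d0 d1 P D2 D0"
  using ck unfolding is_cokernel_diagram_def by auto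

lemma obs[simp]: "b \<in> Ob A" "e \<in> Ob A" "C \<in> Ob A" "P \<in> Ob A"
  using adj oc po unfolding is_adjunction_def is_opcomma_def is_pushout2_def by auto

lemma ars[simp]: "p \<in> Ar A" "dm A p = e" "cd A p = b" "l \<in> Ar A" "dm A l = b" "cd A l = e"
  "d0 \<in> Ar A" "dm A d0 = b" "cd A d0 = C" "d1 \<in> Ar A" "dm A d1 = b" "cd A d1 = C"
  "D0 \<in> Ar A" "dm A D0 = C" "cd A D0 = P" "D1 \<in> Ar A" "dm A D1 = C" "cd A D1 = P"
  "D2 \<in> Ar A" "dm A D2 = C" "cd A D2 = P" "s0 \<in> Ar A" "dm A s0 = C" "cd A s0 = b"
  using adj oc po ck unfolding is_adjunction_def is_opcomma_def is_pushout2_def is_cokernel_diagram_def hom_def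
  by auto

lemma cls[simp]: "\<epsilon> \<in> Cl A" "s2 A \<epsilon> = cmp A l p" "t2 A \<epsilon> = idn A e"
  "\<eta> \<in> Cl A" "s2 A \<eta> = idn A b" "t2 A \<eta> = cmp A p l"
  "al \<in> Cl A" "s2 A al = cmp A d1 p" "t2 A al = cmp A d0 p"
  using adj oc unfolding is_adjunction_def is_opcomma_def cells_def by auto

lemma tri1: "vc A (hc A \<epsilon> (id2 A l)) (hc A (id2 A l) \<eta>) = id2 A l"
  and tri2: "vc A (hc A (id2 A p) \<epsilon>) (hc A \<eta> (id2 A p)) = id2 A p"
  using adj unfolding is_adjunction_def by auto

lemma ckeq[simp]: "cmp A D2 d0 = cmp A D0 d1"
  "cmp A D1 d1 = cmp A D2 d1" "cmp A D1 d0 = cmp A D0 d0"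
  "cmp A s0 d0 = idn A b" "cmp A s0 d1 = idn A b"
  using ck po unfolding is_cokernel_diagram_def is_pushout2_def by auto

lemma ckeq_ctx[simp]: "X \<in> Ar A \<Longrightarrow> dm A X = P \<Longrightarrow> cmp A (cmp A X D2) d0 = cmp A (cmp A X D0) d1"
  "X \<in> Ar A \<Longrightarrow> dm A X = P \<Longrightarrow> cmp A (cmp A X D1) d1 = cmp A (cmp A X D2) d1"
  "X \<in> Ar A \<Longrightarrow> dm A X = P \<Longrightarrow> cmp A (cmp A X D1) d0 = cmp A (cmp A X D0) d0"
  "X \<in> Ar A \<Longrightarrow> dm A X = b \<Longrightarrow> cmp A (cmp A X s0) d0 = X"
  "X \<in> Ar A \<Longrightarrow> dm A X = b \<Longrightarrow> cmp A (cmp A X s0) d1 = X"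
  by (subst cmp_assoc[symmetric]; simp)+

lemma D1al: "hc A (id2 A D1) al = vc A (hc A (id2 A D0) al) (hc A (id2 A D2) al)"
  and s0al[simp]: "hc A (id2 A s0) al = id2 A p"
  using ck unfolding is_cokernel_diagram_def by auto

lemma s0al_ctx[simp]: "X \<in> Ar A \<Longrightarrow> dm A X = b \<Longrightarrow> hc A (id2 A (cmp A X s0)) al = id2 A (cmp A X p)"
  by (subst whisk_l_ctx[OF s0al]) auto


definition alp where "alp = vc A (hc A al (id2 A l)) (hc A (id2 A d1) \<eta>)"

lemma alp_cl[simp]: "alp \<in> Cl A" "s2 A alp = d1" "t2 A alp = cmp A (cmp A d0 p) l"
  unfolding alp_def by simp_all

lemma s0alp[simp]: "hc A (id2 A s0) alp = \<eta>"
  unfolding alp_def by simp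

lemma nat_al_eps: "vc A (hc A (id2 A (cmp A d0 p)) \<epsilon>) (hc A al (id2 A (cmp A l p))) = vc A al (hc A (id2 A (cmp A d1 p)) \<epsilon>)"
  using natural[of \<epsilon> al] by simp

lemma Kal: "vc A (hc A (id2 A (cmp A d0 p)) \<epsilon>) (hc A alp (id2 A p)) = al"
proof -
  have t: "vc A (hc A (id2 A (cmp A d1 p)) \<epsilon>) (hc A (hc A (id2 A d1) \<eta>) (id2 A p)) = id2 A (cmp A d1 p)"
    using arg_cong[OF tri2, of "hc A (id2 A d1)"] by simp
  show ?thesis unfolding alp_def by (simp add: vc_ctx[OF nat_al_eps] t)
qed

lemma oc_univ: "y \<in> Ob A \<Longrightarrow> cat_iso (hom A C y) (cells A) (vc A) (id2 A)
        (oc_obj A p y) (oc_hom A p) (pair_vc A) (\<lambda>(h0, h1, \<beta>). (id2 A h0, id2 A h1))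
        (\<lambda>h. (cmp A h d0, cmp A h d1, hc A (id2 A h) al))
        (\<lambda>\<xi>. (hc A \<xi> (id2 A d0), hc A \<xi> (id2 A d1)))"
  using oc unfolding is_opcomma_def by blast

lemma po_univ: "y \<in> Ob A \<Longrightarrow> cat_iso (hom A P y) (cells A) (vc A) (id2 A)
        (po_obj A d0 d1 y) (po_hom A d0 d1) (pair_vc A) (\<lambda>(k0, k1). (id2 A k0, id2 A k1))
        (\<lambda>k. (cmp A k D2, cmp A k D0))
        (\<lambda>\<xi>. (hc A \<xi> (id2 A D2), hc A \<xi> (id2 A D0)))"
  using po unfolding is_pushout2_def by blast

lemma ex_r: "\<exists>r \<in> hom A C b. cmp A r d0 = idn A b \<and> cmp A r d1 = cmp A p l \<and> hc A (id2 A r) al = hc A (id2 A p) \<epsilon>"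
proof -
  have "(idn A b, cmp A p l, hc A (id2 A p) \<epsilon>) \<in> oc_obj A p b"
    unfolding oc_obj_def by (auto intro!: hom_I cells_I)
  from ci_surj[OF oc_univ[OF obs(1)] this] show ?thesis by auto
qed


lemma ex_kappa: "\<exists>k \<in> hom A C C. cmp A k d0 = cmp A (cmp A d0 p) l \<and> cmp A k d1 = d1 \<and> hc A (id2 A k) al = hc A alp (id2 A p)"
proof -
  have "(cmp A (cmp A d0 p) l, d1, hc A alp (id2 A p)) \<in> oc_obj A p C"
    unfolding oc_obj_def by (auto intro!: hom_I cells_I)
  from ci_surj[OF oc_univ[OF obs(3)] this] show ?thesis by auto
qed

lemma oc_2cell: assumes y: "y \<in> Ob A" and h: "h \<in> hom A C y" and h': "h' \<in> hom A C y"
  and m: "(\<xi>0, \<xi>1) \<in> oc_hom A p (cmp A h d0, cmp A h d1, hc A (id2 A h) al) (cmp A h' d0, cmp A h' d1, hc A (id2 A h') al)"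
  shows "\<exists>\<theta>\<in>cells A h h'. hc A \<theta> (id2 A d0) = \<xi>0 \<and> hc A \<theta> (id2 A d1) = \<xi>1"
proof -
  note ci = oc_univ[OF y]
  have "\<exists>n\<in>cells A h h'. (\<lambda>\<xi>. (hc A \<xi> (id2 A d0), hc A \<xi> (id2 A d1))) n = (\<xi>0, \<xi>1)"
    by (rule ci_hom_surj[OF ci h h']) (use m in simp)
  then show ?thesis by simp
qed

lemma ex_theta:
  assumes k: "k \<in> hom A C C" "cmp A k d0 = cmp A (cmp A d0 p) l" "cmp A k d1 = d1" "hc A (id2 A k) al = hc A alp (id2 A p)"
  shows "\<exists>\<theta> \<in> cells A (cmp A d1 s0) k. hc A \<theta> (id2 A d0) = alp \<and> hc A \<theta> (id2 A d1) = id2 A d1"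
proof (rule oc_2cell[OF obs(3)])
  have kk[simp]: "k \<in> Ar A" "dm A k = C" "cd A k = C" using k(1) by (auto dest: hom_D)
  show "cmp A d1 s0 \<in> hom A C C" by (auto intro!: hom_I)
  show "k \<in> hom A C C" by (rule k(1))
  have eq: "vc A (hc A alp (id2 A p)) (id2 A (cmp A d1 p)) = vc A (hc A alp (id2 A p)) (hc A (id2 A d1) (id2 A p))"
    by simp
  have c1: "alp \<in> cells A d1 (cmp A (cmp A d0 p) l)" "id2 A d1 \<in> cells A d1 d1"
    by (auto intro!: cells_I)
  have "(alp, id2 A d1) \<in> oc_hom A p (d1, d1, id2 A (cmp A d1 p)) (cmp A (cmp A d0 p) l, d1, hc A alp (id2 A p))"
    unfolding oc_hom_def using eq c1 by (simp only: prod.case mem_Collect_eq)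
  then show "(alp, id2 A d1) \<in> oc_hom A p (cmp A (cmp A d1 s0) d0, cmp A (cmp A d1 s0) d1, hc A (id2 A (cmp A d1 s0)) al)
     (cmp A k d0, cmp A k d1, hc A (id2 A k) al)"
    using k by simp
qed

lemma ex_Q:
  assumes r: "r \<in> hom A C b" "cmp A r d0 = idn A b" "cmp A r d1 = cmp A p l" "hc A (id2 A r) al = hc A (id2 A p) \<epsilon>"
  assumes k: "k \<in> hom A C C" "cmp A k d0 = cmp A (cmp A d0 p) l" "cmp A k d1 = d1" "hc A (id2 A k) al = hc A alp (id2 A p)"
  shows "\<exists>Q \<in> hom A P C. cmp A Q D2 = k \<and> cmp A Q D0 = cmp A d0 r \<and> cmp A Q D1 = idn A C"
proof -
  have kk[simp]: "k \<in> Ar A" "dm A k = C" "cd A k = C" using k(1) by (auto dest: hom_D)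
  have rr[simp]: "r \<in> Ar A" "dm A r = C" "cd A r = b" using r(1) by (auto dest: hom_D)
  have rc[simp]: "cmp A (cmp A d0 r) d1 = cmp A (cmp A d0 p) l" "cmp A (cmp A d0 r) d0 = d0"
    using cmp_ctx[OF r(3), of d0] cmp_ctx[OF r(2), of d0] by simp_all
  have rac: "hc A (id2 A (cmp A d0 r)) al = hc A (id2 A (cmp A d0 p)) \<epsilon>"
    using whisk_l_ctx[OF r(4), of d0] by simp
  have "(k, cmp A d0 r) \<in> po_obj A d0 d1 C"
    unfolding po_obj_def using k by (auto intro!: hom_I)
  from ci_surj[OF po_univ[OF obs(3)] this] obtain Q where Q: "Q \<in> hom A P C" "cmp A Q D2 = k" "cmp A Q D0 = cmp A d0 r"
    by auto
  have QQ[simp]: "Q \<in> Ar A" "dm A Q = P" "cd A Q = C" using Q(1) by (auto dest: hom_D)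
  have "cmp A Q D1 = idn A C"
  proof (rule ci_inj[OF oc_univ[OF obs(3)]])
    show "cmp A Q D1 \<in> hom A C C" "idn A C \<in> hom A C C" by (auto intro!: hom_I)
    have e1: "cmp A (cmp A Q D1) d0 = d0" using Q by simp
    have e2: "cmp A (cmp A Q D1) d1 = d1" using Q k by simp
    have e3: "hc A (id2 A (cmp A Q D1)) al = al"
      using whisk_l_ctx[OF D1al, of Q] Q k by (simp add: rac Kal)
    show "(\<lambda>h. (cmp A h d0, cmp A h d1, hc A (id2 A h) al)) (cmp A Q D1) =
          (\<lambda>h. (cmp A h d0, cmp A h d1, hc A (id2 A h) al)) (idn A C)"
      using e1 e2 e3 by simp
  qed
  then show ?thesis using Q by auto
qed

lemma ex_Q2:
  assumes r: "r \<in> hom A C b" "cmp A r d0 = idn A b" "cmp A r d1 = cmp A p l"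
  shows "\<exists>Q \<in> hom A P b. cmp A Q D2 = cmp A (cmp A p l) r \<and> cmp A Q D0 = r"
proof -
  have rr[simp]: "r \<in> Ar A" "dm A r = C" "cd A r = b" using r(1) by (auto dest: hom_D)
  have "(cmp A (cmp A p l) r, r) \<in> po_obj A d0 d1 b"
  proof -
    have rc: "cmp A (cmp A (cmp A p l) r) d0 = cmp A p l" using cmp_ctx[OF r(2), of "cmp A p l"] by simp
    have "cmp A (cmp A p l) r \<in> hom A (cd A d0) b" "r \<in> hom A (cd A d1) b" by (auto intro!: hom_I)
    then show ?thesis unfolding po_obj_def using rc r(3) by simp
  qed
  from ci_surj[OF po_univ[OF obs(1)] this] obtain Q where "Q \<in> hom A P b" "(cmp A Q D2, cmp A Q D0) = (cmp A (cmp A p l) r, r)"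
    by blast
  then show ?thesis by blast
qed

end


context tc begin

lemma em_iso:
  assumes t: "t \<in> Ar A"
    and EX: "is_EM_object A t m \<eta> X u \<mu>" and EL: "is_EM_object A t m \<eta> L d \<mu>'"
    and z: "z \<in> Ob A" and k: "k \<in> hom A z X" and pH: "pH \<in> hom A z L"
    and eq1: "cmp A u k = cmp A d pH" and eq2: "hc A \<mu> (id2 A k) = hc A \<mu>' (id2 A pH)"
  shows "iso_factorizations A L d pH X u k"
proof -
  note [simp] = t
  have X[simp]: "X \<in> Ob A" and u[simp]: "u \<in> Ar A" "dm A u = X" "cd A u = dm A t"
    and M[simp]: "\<mu> \<in> Cl A" "s2 A \<mu> = cmp A t u" "t2 A \<mu> = u"
    and ciX: "\<And>y. y \<in> Ob A \<Longrightarrow> cat_iso (hom A y X) (cells A) (vc A) (id2 A)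
        (em_obj A t m \<eta> y) (em_hom A t) (vc A) (\<lambda>(h, \<beta>). id2 A h)
        (\<lambda>g. (cmp A u g, hc A \<mu> (id2 A g))) (\<lambda>\<xi>. hc A (id2 A u) \<xi>)"
    using EX unfolding is_EM_object_def by (auto dest: hom_D cells_D)
  have L[simp]: "L \<in> Ob A" and d[simp]: "d \<in> Ar A" "dm A d = L" "cd A d = dm A t"
    and M'[simp]: "\<mu>' \<in> Cl A" "s2 A \<mu>' = cmp A t d" "t2 A \<mu>' = d"
    and ciL: "\<And>y. y \<in> Ob A \<Longrightarrow> cat_iso (hom A y L) (cells A) (vc A) (id2 A)
        (em_obj A t m \<eta> y) (em_hom A t) (vc A) (\<lambda>(h, \<beta>). id2 A h)
        (\<lambda>g. (cmp A d g, hc A \<mu>' (id2 A g))) (\<lambda>\<xi>. hc A (id2 A d) \<xi>)"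
    using EL unfolding is_EM_object_def by (auto dest: hom_D cells_D)
  have kk[simp]: "k \<in> Ar A" "dm A k = z" "cd A k = X" using k by (auto dest: hom_D)
  have pp[simp]: "pH \<in> Ar A" "dm A pH = z" "cd A pH = L" using pH by (auto dest: hom_D)
  have idL: "idn A L \<in> hom A L L" and idX: "idn A X \<in> hom A X X" by (auto intro!: hom_I)
  have "(\<lambda>g. (cmp A d g, hc A \<mu>' (id2 A g))) (idn A L) \<in> em_obj A t m \<eta> L"
    by (rule ci_in[OF ciL[OF L] idL])
  then have dL: "(d, \<mu>') \<in> em_obj A t m \<eta> L" by simp
  have "(\<lambda>g. (cmp A u g, hc A \<mu> (id2 A g))) (idn A X) \<in> em_obj A t m \<eta> X"
    by (rule ci_in[OF ciX[OF X] idX])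
  then have uX: "(u, \<mu>) \<in> em_obj A t m \<eta> X" by simp
  obtain \<phi> where \<phi>: "\<phi> \<in> hom A L X" "(\<lambda>g. (cmp A u g, hc A \<mu> (id2 A g))) \<phi> = (d, \<mu>')"
    using ci_surj[OF ciX[OF L] dL] by blast
  obtain \<psi> where \<psi>: "\<psi> \<in> hom A X L" "(\<lambda>g. (cmp A d g, hc A \<mu>' (id2 A g))) \<psi> = (u, \<mu>)"
    using ci_surj[OF ciL[OF X] uX] by blast
  have ph[simp]: "\<phi> \<in> Ar A" "dm A \<phi> = L" "cd A \<phi> = X" using \<phi>(1) by (auto dest: hom_D)
  have ps[simp]: "\<psi> \<in> Ar A" "dm A \<psi> = X" "cd A \<psi> = L" using \<psi>(1) by (auto dest: hom_D)
  have ph1[simp]: "cmp A u \<phi> = d" and ph2: "hc A \<mu> (id2 A \<phi>) = \<mu>'" using \<phi>(2) by auto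
  have ps1[simp]: "cmp A d \<psi> = u" and ps2: "hc A \<mu>' (id2 A \<psi>) = \<mu>" using \<psi>(2) by auto
  have ph1c[simp]: "cmp A (cmp A u \<phi>) g = cmp A d g" for g by simp
  have ps1c[simp]: "cmp A (cmp A d \<psi>) g = cmp A u g" for g by simp
  have "cmp A \<psi> \<phi> = idn A L"
  proof (rule ci_inj[OF ciL[OF L]])
    show "cmp A \<psi> \<phi> \<in> hom A L L" by (auto intro!: hom_I)
    show "idn A L \<in> hom A L L" by (rule idL)
    have "hc A \<mu>' (id2 A (cmp A \<psi> \<phi>)) = \<mu>'"
      using whisk_r_ctx[OF ps2, of \<phi>] ph2 by simp
    then show "(\<lambda>g. (cmp A d g, hc A \<mu>' (id2 A g))) (cmp A \<psi> \<phi>) = (\<lambda>g. (cmp A d g, hc A \<mu>' (id2 A g))) (idn A L)"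
      by simp
  qed
  moreover have "cmp A \<phi> \<psi> = idn A X"
  proof (rule ci_inj[OF ciX[OF X]])
    show "cmp A \<phi> \<psi> \<in> hom A X X" by (auto intro!: hom_I)
    show "idn A X \<in> hom A X X" by (rule idX)
    have "hc A \<mu> (id2 A (cmp A \<phi> \<psi>)) = \<mu>"
      using whisk_r_ctx[OF ph2, of \<psi>] ps2 by simp
    then show "(\<lambda>g. (cmp A u g, hc A \<mu> (id2 A g))) (cmp A \<phi> \<psi>) = (\<lambda>g. (cmp A u g, hc A \<mu> (id2 A g))) (idn A X)"
      by simp
  qed
  moreover have "cmp A \<phi> pH = k"
  proof (rule ci_inj[OF ciX[OF z]])
    show "cmp A \<phi> pH \<in> hom A z X" by (auto intro!: hom_I)
    show "k \<in> hom A z X" by (rule k)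
    have "hc A \<mu> (id2 A (cmp A \<phi> pH)) = hc A \<mu> (id2 A k)"
      using whisk_r_ctx[OF ph2, of pH] eq2 by simp
    then show "(\<lambda>g. (cmp A u g, hc A \<mu> (id2 A g))) (cmp A \<phi> pH) = (\<lambda>g. (cmp A u g, hc A \<mu> (id2 A g))) k"
      using eq1 by simp
  qed
  ultimately show ?thesis unfolding iso_factorizations_def using \<phi>(1) \<psi>(1) by auto
qed

end

locale adjck2 = adjck +
  fixes r \<kappa> \<theta> Q Q2
  assumes r: "r \<in> hom A C b" and rd0[simp]: "cmp A r d0 = idn A b" and rd1[simp]: "cmp A r d1 = cmp A p l"
    and ral[simp]: "hc A (id2 A r) al = hc A (id2 A p) \<epsilon>"
  and \<kappa>: "\<kappa> \<in> hom A C C" and \<kappa>d0[simp]: "cmp A \<kappa> d0 = cmp A (cmp A d0 p) l" and \<kappa>d1[simp]: "cmp A \<kappa> d1 = d1"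
    and \<kappa>al[simp]: "hc A (id2 A \<kappa>) al = hc A alp (id2 A p)"
  and \<theta>: "\<theta> \<in> cells A (cmp A d1 s0) \<kappa>" and \<theta>d0: "hc A \<theta> (id2 A d0) = alp" and \<theta>d1: "hc A \<theta> (id2 A d1) = id2 A d1"
  and Q: "Q \<in> hom A P C" and QD2[simp]: "cmp A Q D2 = \<kappa>" and QD0[simp]: "cmp A Q D0 = cmp A d0 r"
    and QD1[simp]: "cmp A Q D1 = idn A C"
  and Q2: "Q2 \<in> hom A P b" and Q2D2[simp]: "cmp A Q2 D2 = cmp A (cmp A p l) r" and Q2D0[simp]: "cmp A Q2 D0 = r"
begin

lemma ars2[simp]: "r \<in> Ar A" "dm A r = C" "cd A r = b" "\<kappa> \<in> Ar A" "dm A \<kappa> = C" "cd A \<kappa> = C"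
  "Q \<in> Ar A" "dm A Q = P" "cd A Q = C" "Q2 \<in> Ar A" "dm A Q2 = P" "cd A Q2 = b"
  "\<theta> \<in> Cl A" "s2 A \<theta> = cmp A d1 s0" "t2 A \<theta> = \<kappa>"
  using r \<kappa> Q Q2 \<theta> by (auto dest: hom_D cells_D)

lemma r_ctx[simp]: "X \<in> Ar A \<Longrightarrow> dm A X = b \<Longrightarrow> cmp A (cmp A X r) d0 = X"
  "X \<in> Ar A \<Longrightarrow> dm A X = b \<Longrightarrow> cmp A (cmp A X r) d1 = cmp A (cmp A X p) l"
  "X \<in> Ar A \<Longrightarrow> dm A X = b \<Longrightarrow> hc A (id2 A (cmp A X r)) al = hc A (id2 A (cmp A X p)) \<epsilon>"
  by (subst cmp_ctx[OF rd0] cmp_ctx[OF rd1] whisk_l_ctx[OF ral]; simp)+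

lemma Q_ctx[simp]: "X \<in> Ar A \<Longrightarrow> dm A X = C \<Longrightarrow> cmp A (cmp A X Q) D2 = cmp A X \<kappa>"
  "X \<in> Ar A \<Longrightarrow> dm A X = C \<Longrightarrow> cmp A (cmp A X Q) D0 = cmp A (cmp A X d0) r"
  "X \<in> Ar A \<Longrightarrow> dm A X = C \<Longrightarrow> cmp A (cmp A X Q) D1 = X"
  "X \<in> Ar A \<Longrightarrow> dm A X = b \<Longrightarrow> cmp A (cmp A X Q2) D2 = cmp A (cmp A (cmp A X p) l) r"
  "X \<in> Ar A \<Longrightarrow> dm A X = b \<Longrightarrow> cmp A (cmp A X Q2) D0 = cmp A X r"
  by (subst cmp_ctx[OF QD2] cmp_ctx[OF QD0] cmp_ctx[OF QD1] cmp_ctx[OF Q2D2] cmp_ctx[OF Q2D0]; simp)+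

lemma ralp[simp]: "hc A (id2 A r) alp = id2 A (cmp A p l)"
  using arg_cong[OF tri1, of "hc A (id2 A p)"] unfolding alp_def by simp

lemma Q2D1al: "hc A (id2 A (cmp A Q2 D1)) al = vc A (hc A (id2 A p) \<epsilon>) (hc A (id2 A (cmp A (cmp A p l) p)) \<epsilon>)"
  using whisk_l_ctx[OF D1al, of Q2] by simp

lemma Q2D1alp[simp]: "hc A (id2 A (cmp A Q2 D1)) alp = hc A (hc A (id2 A p) \<epsilon>) (id2 A l)"
  using arg_cong[OF tri1, of "hc A (id2 A (cmp A (cmp A p l) p))"] unfolding alp_def by (simp add: Q2D1al)


lemma D1alp: "hc A (id2 A D1) alp = vc A (hc A (hc A (id2 A (cmp A D0 d0)) (hc A (id2 A p) \<epsilon>)) (id2 A l))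
   (vc A (hc A (hc A (id2 A D0) alp) (id2 A (cmp A p l))) (hc A (id2 A D2) alp))"
proof -
  note natW = whisk_eq[OF nat_al_eps, of D0 l, simplified]
  note triW = whisk_eq[OF tri2, of "cmp A D0 d1" l, simplified]
  have D1alw: "hc A (hc A (id2 A D1) al) (id2 A l) = vc A (hc A (hc A (id2 A D0) al) (id2 A l)) (hc A (hc A (id2 A D2) al) (id2 A l))"
    by (simp add: D1al)
  show ?thesis unfolding alp_def by (simp add: D1alw vc_ctx[OF natW] vc_ctx[OF triW] triW)
qed

lemma desc_decomp:
  assumes y: "y \<in> Ob A" and X: "(h, \<gamma>) \<in> desc_obj A p K y"
  shows "\<gamma> = vc A (hc A (id2 A (cmp A d0 r)) \<gamma>) (hc A alp (id2 A h))"
proof -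
  have h[simp]: "h \<in> Ar A" "dm A h = y" "cd A h = b" and g[simp]: "\<gamma> \<in> Cl A" "s2 A \<gamma> = cmp A d1 h" "t2 A \<gamma> = cmp A d0 h"
    and coc: "vc A (hc A (id2 A D0) \<gamma>) (hc A (id2 A D2) \<gamma>) = hc A (id2 A D1) \<gamma>"
    and un: "hc A (id2 A s0) \<gamma> = id2 A h"
    using X unfolding desc_obj_def by (auto dest: hom_D cells_D)
  have s1: "\<gamma> = vc A (hc A (id2 A (cmp A d0 r)) \<gamma>) (hc A (id2 A \<kappa>) \<gamma>)"
    using arg_cong[OF coc, of "hc A (id2 A Q)"] by simp
  have s2: "hc A (id2 A \<kappa>) \<gamma> = hc A alp (id2 A h)"
    using natural[of \<gamma> \<theta>] whisk_r_ctx[OF \<theta>d1, of h] whisk_r_ctx[OF \<theta>d0, of h] whisk_l_ctx[OF un, of d1]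
    by simp
  show ?thesis using s1 s2 by simp
qed


abbreviation "TT \<equiv> cmp A p l"
abbreviation "MM \<equiv> hc A (hc A (id2 A p) \<epsilon>) (id2 A l)"

definition Phi where "Phi = (\<lambda>(h, \<gamma>). (h, hc A (id2 A r) \<gamma>))"
definition Psi where "Psi = (\<lambda>(h, \<beta>). (h, vc A (hc A (id2 A d0) \<beta>) (hc A alp (id2 A h))))"

lemma Phi_in:
  assumes y: "y \<in> Ob A" and X: "(h, \<gamma>) \<in> desc_obj A p K y"
  shows "(h, hc A (id2 A r) \<gamma>) \<in> em_obj A TT MM \<eta> y"
proof -
  have h[simp]: "h \<in> Ar A" "dm A h = y" "cd A h = b" and g[simp]: "\<gamma> \<in> Cl A" "s2 A \<gamma> = cmp A d1 h" "t2 A \<gamma> = cmp A d0 h"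
    and coc: "vc A (hc A (id2 A D0) \<gamma>) (hc A (id2 A D2) \<gamma>) = hc A (id2 A D1) \<gamma>"
    and un: "hc A (id2 A s0) \<gamma> = id2 A h"
    using X unfolding desc_obj_def by (auto dest: hom_D cells_D)
  note dec = desc_decomp[OF y X]
  have unit: "vc A (hc A (id2 A r) \<gamma>) (hc A \<eta> (id2 A h)) = id2 A h"
    using arg_cong[OF dec, of "hc A (id2 A s0)"] un by simp
  have m1: "vc A (hc A (id2 A r) \<gamma>) (hc A (id2 A (cmp A (cmp A p l) r)) \<gamma>) = hc A (id2 A (cmp A Q2 D1)) \<gamma>"
    using arg_cong[OF coc, of "hc A (id2 A Q2)"] by simp
  have m2: "hc A (id2 A (cmp A Q2 D1)) \<gamma> = vc A (hc A (id2 A r) \<gamma>) (hc A MM (id2 A h))"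
    using arg_cong[OF dec, of "hc A (id2 A (cmp A Q2 D1))"] by simp
  show ?thesis unfolding em_obj_def using unit m1 m2
    by (auto intro!: hom_I cells_I)
qed

lemma Psi_in:
  assumes y: "y \<in> Ob A" and X: "(h, \<beta>) \<in> em_obj A TT MM \<eta> y"
  shows "(h, vc A (hc A (id2 A d0) \<beta>) (hc A alp (id2 A h))) \<in> desc_obj A p K y"
proof -
  have h[simp]: "h \<in> Ar A" "dm A h = y" "cd A h = b" and g[simp]: "\<beta> \<in> Cl A" "s2 A \<beta> = cmp A (cmp A p l) h" "t2 A \<beta> = h"
    and mult: "vc A \<beta> (hc A (id2 A TT) \<beta>) = vc A \<beta> (hc A MM (id2 A h))"
    and un: "vc A \<beta> (hc A \<eta> (id2 A h)) = id2 A h"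
    using X unfolding em_obj_def by (auto dest: hom_D cells_D)
  have un2: "hc A (id2 A s0) (vc A (hc A (id2 A d0) \<beta>) (hc A alp (id2 A h))) = id2 A h"
    using un by simp
  note natAW = arg_cong[OF natural[of \<beta> alp], of "hc A (id2 A D0)", simplified]
  note multW = arg_cong[OF mult, of "hc A (id2 A (cmp A D0 d0))", simplified]
  have coc: "vc A (hc A (id2 A D0) (vc A (hc A (id2 A d0) \<beta>) (hc A alp (id2 A h))))
       (hc A (id2 A D2) (vc A (hc A (id2 A d0) \<beta>) (hc A alp (id2 A h))))
     = hc A (id2 A D1) (vc A (hc A (id2 A d0) \<beta>) (hc A alp (id2 A h)))"
    by (simp add: vc_ctx[OF natAW[symmetric]] vc_ctx[OF multW] D1alp)
  show ?thesis unfolding desc_obj_def using un2 coc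
    by (auto intro!: hom_I cells_I)
qed

lemma r_Psi: assumes X: "(h, \<beta>) \<in> em_obj A TT MM \<eta> y"
  shows "hc A (id2 A r) (vc A (hc A (id2 A d0) \<beta>) (hc A alp (id2 A h))) = \<beta>"
proof -
  have h[simp]: "h \<in> Ar A" "dm A h = y" "cd A h = b" and g[simp]: "\<beta> \<in> Cl A" "s2 A \<beta> = cmp A (cmp A p l) h" "t2 A \<beta> = h"
    using X unfolding em_obj_def by (auto dest: hom_D cells_D)
  show ?thesis by simp
qed


lemma hom_eq:
  assumes y: "y \<in> Ob A" and X1: "(h1, \<gamma>1) \<in> desc_obj A p K y" and X0: "(h0, \<gamma>0) \<in> desc_obj A p K y"
  shows "desc_hom A K (h1, \<gamma>1) (h0, \<gamma>0) = em_hom A TT (h1, hc A (id2 A r) \<gamma>1) (h0, hc A (id2 A r) \<gamma>0)"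
proof -
  have h[simp]: "h1 \<in> Ar A" "dm A h1 = y" "cd A h1 = b" "h0 \<in> Ar A" "dm A h0 = y" "cd A h0 = b"
   and g[simp]: "\<gamma>1 \<in> Cl A" "s2 A \<gamma>1 = cmp A d1 h1" "t2 A \<gamma>1 = cmp A d0 h1"
     "\<gamma>0 \<in> Cl A" "s2 A \<gamma>0 = cmp A d1 h0" "t2 A \<gamma>0 = cmp A d0 h0"
    using X1 X0 unfolding desc_obj_def by (auto dest: hom_D cells_D)
  note dec0 = desc_decomp[OF y X0] and dec1 = desc_decomp[OF y X1]
  have "\<xi> \<in> desc_hom A K (h1, \<gamma>1) (h0, \<gamma>0) \<longleftrightarrow> \<xi> \<in> em_hom A TT (h1, hc A (id2 A r) \<gamma>1) (h0, hc A (id2 A r) \<gamma>0)" for \<xi>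
  proof (cases "\<xi> \<in> cells A h1 h0")
    case False then show ?thesis unfolding desc_hom_def em_hom_def by simp
  next
    case True
    then have x[simp]: "\<xi> \<in> Cl A" "s2 A \<xi> = h1" "t2 A \<xi> = h0" by (auto dest: cells_D)
    have "vc A \<gamma>0 (hc A (id2 A d1) \<xi>) = vc A (hc A (id2 A d0) \<xi>) \<gamma>1 \<longleftrightarrow>
          vc A \<xi> (hc A (id2 A r) \<gamma>1) = vc A (hc A (id2 A r) \<gamma>0) (hc A (id2 A TT) \<xi>)"
    proof
      assume E: "vc A \<gamma>0 (hc A (id2 A d1) \<xi>) = vc A (hc A (id2 A d0) \<xi>) \<gamma>1"
      show "vc A \<xi> (hc A (id2 A r) \<gamma>1) = vc A (hc A (id2 A r) \<gamma>0) (hc A (id2 A TT) \<xi>)"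
        using arg_cong[OF E, of "hc A (id2 A r)"] by simp
    next
      assume E: "vc A \<xi> (hc A (id2 A r) \<gamma>1) = vc A (hc A (id2 A r) \<gamma>0) (hc A (id2 A TT) \<xi>)"
      note EW = arg_cong[OF E, of "hc A (id2 A d0)", simplified]
      note nat = natural[of \<xi> alp, simplified]
      have "vc A \<gamma>0 (hc A (id2 A d1) \<xi>) = vc A (vc A (hc A (id2 A (cmp A d0 r)) \<gamma>0) (hc A alp (id2 A h0))) (hc A (id2 A d1) \<xi>)"
        using arg_cong[OF dec0, of "\<lambda>g. vc A g (hc A (id2 A d1) \<xi>)"] by simp
      also have "\<dots> = vc A (hc A (id2 A d0) \<xi>) (vc A (hc A (id2 A (cmp A d0 r)) \<gamma>1) (hc A alp (id2 A h1)))"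
        by (simp add: nat[symmetric] vc_ctx[OF EW[symmetric]])
      also have "\<dots> = vc A (hc A (id2 A d0) \<xi>) \<gamma>1"
        using dec1[symmetric] by simp
      finally show "vc A \<gamma>0 (hc A (id2 A d1) \<xi>) = vc A (hc A (id2 A d0) \<xi>) \<gamma>1" .
    qed
    then show ?thesis unfolding desc_hom_def em_hom_def using True by simp
  qed
  then show ?thesis by blast
qed


lemma Psi_Phi: "y \<in> Ob A \<Longrightarrow> X \<in> desc_obj A p K y \<Longrightarrow> Psi (Phi X) = X"
proof -
  assume y: "y \<in> Ob A" and X: "X \<in> desc_obj A p K y"
  obtain h \<gamma> where hg: "X = (h, \<gamma>)" by (cases X)
  have X': "(h, \<gamma>) \<in> desc_obj A p K y" using X hg by simp
  have h[simp]: "h \<in> Ar A" "dm A h = y" "cd A h = b" and g[simp]: "\<gamma> \<in> Cl A" "s2 A \<gamma> = cmp A d1 h" "t2 A \<gamma> = cmp A d0 h"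
    using X' unfolding desc_obj_def by (auto dest: hom_D cells_D)
  have "vc A (hc A (id2 A d0) (hc A (id2 A r) \<gamma>)) (hc A alp (id2 A h)) = \<gamma>"
    using desc_decomp[OF y X'] by simp
  then show ?thesis unfolding hg Phi_def Psi_def by simp
qed

lemma Phi_Psi: "y \<in> Ob A \<Longrightarrow> X \<in> em_obj A TT MM \<eta> y \<Longrightarrow> Phi (Psi X) = X"
  unfolding Phi_def Psi_def by (cases X) (simp add: r_Psi)

lemma Phi_img: "y \<in> Ob A \<Longrightarrow> X \<in> desc_obj A p K y \<Longrightarrow> Phi X \<in> em_obj A TT MM \<eta> y"
  unfolding Phi_def by (cases X) (simp add: Phi_in)

lemma Psi_img: "y \<in> Ob A \<Longrightarrow> X \<in> em_obj A TT MM \<eta> y \<Longrightarrow> Psi X \<in> desc_obj A p K y"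
  unfolding Psi_def by (cases X) (simp add: Psi_in)

lemma bij_Phi: "y \<in> Ob A \<Longrightarrow> bij_betw Phi (desc_obj A p K y) (em_obj A TT MM \<eta> y)"
  by (rule bij_betw_byWitness[where f'=Psi]) (auto simp: Psi_Phi Phi_Psi Phi_img Psi_img)

lemma bij_Psi: "y \<in> Ob A \<Longrightarrow> bij_betw Psi (em_obj A TT MM \<eta> y) (desc_obj A p K y)"
  by (rule bij_betw_byWitness[where f'=Phi]) (auto simp: Psi_Phi Phi_Psi Phi_img Psi_img)

lemma hom_Phi: "y \<in> Ob A \<Longrightarrow> X1 \<in> desc_obj A p K y \<Longrightarrow> X0 \<in> desc_obj A p K y \<Longrightarrow>
   em_hom A TT (Phi X1) (Phi X0) = desc_hom A K X1 X0"
  unfolding Phi_def by (cases X1; cases X0) (simp add: hom_eq)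

lemma hom_Psi: "y \<in> Ob A \<Longrightarrow> X1 \<in> em_obj A TT MM \<eta> y \<Longrightarrow> X0 \<in> em_obj A TT MM \<eta> y \<Longrightarrow>
   desc_hom A K (Psi X1) (Psi X0) = em_hom A TT X1 X0"
  using hom_Phi[of y "Psi X1" "Psi X0"] by (simp add: Psi_img Phi_Psi)

lemma desc_to_EM:
  assumes D: "is_lax_descent_object A p K L d \<Psi>"
  shows "is_EM_object A TT MM \<eta> L d (hc A (id2 A r) \<Psi>)"
proof -
  have L[simp]: "L \<in> Ob A" and d[simp]: "d \<in> Ar A" "dm A d = L" "cd A d = b"
    and P[simp]: "\<Psi> \<in> Cl A" "s2 A \<Psi> = cmp A d1 d" "t2 A \<Psi> = cmp A d0 d"
    and ci: "\<And>y. y \<in> Ob A \<Longrightarrow> cat_iso (hom A y L) (cells A) (vc A) (id2 A)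
        (desc_obj A p K y) (desc_hom A K) (vc A) (\<lambda>(h, \<beta>). id2 A h)
        (\<lambda>g. (cmp A d g, hc A \<Psi> (id2 A g)))
        (\<lambda>\<xi>. hc A (id2 A d) \<xi>)"
    using D unfolding is_lax_descent_object_def by (auto dest: hom_D cells_D)
  have "cat_iso (hom A y L) (cells A) (vc A) (id2 A)
        (em_obj A TT MM \<eta> y) (em_hom A TT) (vc A) (\<lambda>(h, \<beta>). id2 A h)
        (\<lambda>g. (cmp A d g, hc A (hc A (id2 A r) \<Psi>) (id2 A g)))
        (\<lambda>\<xi>. hc A (id2 A d) \<xi>)" if y: "y \<in> Ob A" for y
  proof (rule ci_transfer[OF ci[OF y] bij_Phi[OF y]])
    show "em_hom A TT (Phi x) (Phi x') = desc_hom A K x x'" if "x \<in> desc_obj A p K y" "x' \<in> desc_obj A p K y" for x x'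
      using hom_Phi[OF y that] .
    show "(case Phi x of (h, \<beta>) \<Rightarrow> id2 A h) = (case x of (h, \<beta>) \<Rightarrow> id2 A h)" for x
      unfolding Phi_def by (cases x) simp
    show "(cmp A d g, hc A (hc A (id2 A r) \<Psi>) (id2 A g)) = Phi (cmp A d g, hc A \<Psi> (id2 A g))" if "g \<in> hom A y L" for g
      using that unfolding Phi_def by (auto dest!: hom_D)
  qed
  then show ?thesis unfolding is_EM_object_def by (auto intro!: hom_I cells_I)
qed

lemma EM_to_desc:
  assumes E: "is_EM_object A TT MM \<eta> X u \<mu>"
  shows "is_lax_descent_object A p K X u (vc A (hc A (id2 A d0) \<mu>) (hc A alp (id2 A u)))"
proof -
  have X[simp]: "X \<in> Ob A" and u[simp]: "u \<in> Ar A" "dm A u = X" "cd A u = b"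
    and M[simp]: "\<mu> \<in> Cl A" "s2 A \<mu> = cmp A (cmp A p l) u" "t2 A \<mu> = u"
    and ci: "\<And>y. y \<in> Ob A \<Longrightarrow> cat_iso (hom A y X) (cells A) (vc A) (id2 A)
        (em_obj A TT MM \<eta> y) (em_hom A TT) (vc A) (\<lambda>(h, \<beta>). id2 A h)
        (\<lambda>g. (cmp A u g, hc A \<mu> (id2 A g)))
        (\<lambda>\<xi>. hc A (id2 A u) \<xi>)"
    using E unfolding is_EM_object_def by (auto dest: hom_D cells_D)
  have "cat_iso (hom A y X) (cells A) (vc A) (id2 A)
        (desc_obj A p K y) (desc_hom A K) (vc A) (\<lambda>(h, \<beta>). id2 A h)
        (\<lambda>g. (cmp A u g, hc A (vc A (hc A (id2 A d0) \<mu>) (hc A alp (id2 A u))) (id2 A g)))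
        (\<lambda>\<xi>. hc A (id2 A u) \<xi>)" if y: "y \<in> Ob A" for y
  proof (rule ci_transfer[OF ci[OF y] bij_Psi[OF y]])
    show "desc_hom A K (Psi x) (Psi x') = em_hom A TT x x'" if "x \<in> em_obj A TT MM \<eta> y" "x' \<in> em_obj A TT MM \<eta> y" for x x'
      using hom_Psi[OF y that] .
    show "(case Psi x of (h, \<beta>) \<Rightarrow> id2 A h) = (case x of (h, \<beta>) \<Rightarrow> id2 A h)" for x
      unfolding Psi_def by (cases x) simp
    show "(cmp A u g, hc A (vc A (hc A (id2 A d0) \<mu>) (hc A alp (id2 A u))) (id2 A g)) = Psi (cmp A u g, hc A \<mu> (id2 A g))"
      if "g \<in> hom A y X" for g
      using that unfolding Psi_def by (auto dest!: hom_D)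
  qed
  then show ?thesis unfolding is_lax_descent_object_def by (auto intro!: hom_I cells_I)
qed


lemma part1: "desc_EM_agree A A l p \<epsilon> \<eta> K"
proof -
  have ex1: "\<exists>X u \<mu> k. is_EM_factorization A l p \<epsilon> \<eta> X u \<mu> k"
    if "is_lax_descent_factorization A p K L d \<Psi> pH" for L d \<Psi> pH
  proof -
    from that have D: "is_lax_descent_object A p K L d \<Psi>" and pH: "pH \<in> hom A (dm A p) L"
      and dp: "cmp A d pH = p" and Pa: "hc A \<Psi> (id2 A pH) = al"
      unfolding is_lax_descent_factorization_def by auto
    have d[simp]: "d \<in> Ar A" "dm A d = L" "cd A d = b"
      and P[simp]: "\<Psi> \<in> Cl A" "s2 A \<Psi> = cmp A d1 d" "t2 A \<Psi> = cmp A d0 d"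
      using D unfolding is_lax_descent_object_def by (auto dest: hom_D cells_D)
    have pp[simp]: "pH \<in> Ar A" "dm A pH = e" "cd A pH = L" using pH by (auto dest: hom_D)
    have "hc A (hc A (id2 A r) \<Psi>) (id2 A pH) = hc A (id2 A r) (hc A \<Psi> (id2 A pH))" by simp
    also have "\<dots> = hc A (id2 A p) \<epsilon>" by (simp add: Pa)
    finally have "is_EM_factorization A l p \<epsilon> \<eta> L d (hc A (id2 A r) \<Psi>) pH"
      unfolding is_EM_factorization_def using desc_to_EM[OF D] pH dp by simp
    then show ?thesis by blast
  qed
  have ex2: "\<exists>L d \<Psi> pH. is_lax_descent_factorization A p K L d \<Psi> pH"
    if "is_EM_factorization A l p \<epsilon> \<eta> X u \<mu> k" for X u \<mu> k
  proof -
    from that have E: "is_EM_object A TT MM \<eta> X u \<mu>" and k: "k \<in> hom A (dm A p) X"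
      and uk: "cmp A u k = p" and mk: "hc A \<mu> (id2 A k) = hc A (id2 A p) \<epsilon>"
      unfolding is_EM_factorization_def by auto
    have u[simp]: "u \<in> Ar A" "dm A u = X" "cd A u = b"
      and M[simp]: "\<mu> \<in> Cl A" "s2 A \<mu> = cmp A (cmp A p l) u" "t2 A \<mu> = u"
      using E unfolding is_EM_object_def by (auto dest: hom_D cells_D)
    have kk[simp]: "k \<in> Ar A" "dm A k = e" "cd A k = X" using k by (auto dest: hom_D)
    have mk': "hc A (hc A (id2 A d0) \<mu>) (id2 A k) = hc A (id2 A (cmp A d0 p)) \<epsilon>"
    proof -
      have "hc A (hc A (id2 A d0) \<mu>) (id2 A k) = hc A (id2 A d0) (hc A \<mu> (id2 A k))" by simp
      also have "\<dots> = hc A (id2 A (cmp A d0 p)) \<epsilon>" by (simp add: mk)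
      finally show ?thesis .
    qed
    have "hc A (vc A (hc A (id2 A d0) \<mu>) (hc A alp (id2 A u))) (id2 A k) = al"
      using Kal by (simp add: mk' uk)
    then have "is_lax_descent_factorization A p K X u (vc A (hc A (id2 A d0) \<mu>) (hc A alp (id2 A u))) k"
      unfolding is_lax_descent_factorization_def using EM_to_desc[OF E] k uk by simp
    then show ?thesis by blast
  qed
  have iso: "iso_factorizations A L d pH X u k"
    if D: "is_lax_descent_factorization A p K L d \<Psi> pH" and E: "is_EM_factorization A l p \<epsilon> \<eta> X u \<mu> k"
    for L d \<Psi> pH X u \<mu> k
  proof -
    from D have D': "is_lax_descent_object A p K L d \<Psi>" and pH: "pH \<in> hom A (dm A p) L"
      and dp: "cmp A d pH = p" and Pa: "hc A \<Psi> (id2 A pH) = al"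
      unfolding is_lax_descent_factorization_def by auto
    from E have E': "is_EM_object A TT MM \<eta> X u \<mu>" and k: "k \<in> hom A (dm A p) X"
      and uk: "cmp A u k = p" and mk: "hc A \<mu> (id2 A k) = hc A (id2 A p) \<epsilon>"
      unfolding is_EM_factorization_def by auto
    have d[simp]: "d \<in> Ar A" "dm A d = L" "cd A d = b"
      and P[simp]: "\<Psi> \<in> Cl A" "s2 A \<Psi> = cmp A d1 d" "t2 A \<Psi> = cmp A d0 d"
      using D' unfolding is_lax_descent_object_def by (auto dest: hom_D cells_D)
    have pp[simp]: "pH \<in> Ar A" "dm A pH = e" "cd A pH = L" using pH by (auto dest: hom_D)
    have "hc A (hc A (id2 A r) \<Psi>) (id2 A pH) = hc A (id2 A r) (hc A \<Psi> (id2 A pH))" by simp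
    also have "\<dots> = hc A (id2 A p) \<epsilon>" by (simp add: Pa)
    finally have eq: "hc A \<mu> (id2 A k) = hc A (hc A (id2 A r) \<Psi>) (id2 A pH)" using mk by simp
    show ?thesis
      by (rule em_iso[OF _ E' desc_to_EM[OF D'] _ k pH _ eq]) (simp_all add: uk dp)
  qed
  show ?thesis unfolding desc_EM_agree_def using ex1 ex2 iso by blast
qed

end


lemma (in tc) part1_ex: "desc_EM_agree A A l p \<epsilon> \<eta> K"
  if adj: "is_adjunction A b e l p \<epsilon> \<eta>" and ck: "is_cokernel_diagram A p K" for b e l p \<epsilon> \<eta> K
proof -
  interpret adjck A b e l p \<epsilon> \<eta> K by unfold_locales (rule adj, rule ck)
  obtain r where r: "r \<in> hom A C b" "cmp A r d0 = idn A b" "cmp A r d1 = cmp A p l" "hc A (id2 A r) al = hc A (id2 A p) \<epsilon>"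
    using ex_r by blast
  obtain k where k: "k \<in> hom A C C" "cmp A k d0 = cmp A (cmp A d0 p) l" "cmp A k d1 = d1" "hc A (id2 A k) al = hc A alp (id2 A p)"
    using ex_kappa by blast
  obtain \<theta> where th: "\<theta> \<in> cells A (cmp A d1 s0) k" "hc A \<theta> (id2 A d0) = alp" "hc A \<theta> (id2 A d1) = id2 A d1"
    using ex_theta[OF k] by blast
  obtain Q where Q: "Q \<in> hom A P C" "cmp A Q D2 = k" "cmp A Q D0 = cmp A d0 r" "cmp A Q D1 = idn A C"
    using ex_Q[OF r k] by blast
  obtain Q2 where Q2: "Q2 \<in> hom A P b" "cmp A Q2 D2 = cmp A (cmp A p l) r" "cmp A Q2 D0 = r"
    using ex_Q2[OF r(1-3)] by blast
  interpret adjck2 A b e l p \<epsilon> \<eta> K r k \<theta> Q Q2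
    by unfold_locales (fact r k th Q Q2)+
  show ?thesis by (rule part1)
qed


lemma op2_simps[simp]: "Ob (op2 A) = Ob A" "Ar (op2 A) = Ar A" "Cl (op2 A) = Cl A" "dm (op2 A) = cd A" "cd (op2 A) = dm A"
  "cmp (op2 A) g f = cmp A f g" "idn (op2 A) = idn A" "s2 (op2 A) = s2 A" "t2 (op2 A) = t2 A" "vc (op2 A) = vc A"
  "hc (op2 A) \<beta> \<alpha> = hc A \<alpha> \<beta>" "id2 (op2 A) = id2 A"
  by (simp_all add: op2_def)

lemma co2_simps[simp]: "Ob (co2 A) = Ob A" "Ar (co2 A) = Ar A" "Cl (co2 A) = Cl A" "dm (co2 A) = dm A" "cd (co2 A) = cd A"
  "cmp (co2 A) = cmp A" "idn (co2 A) = idn A" "s2 (co2 A) = t2 A" "t2 (co2 A) = s2 A" "vc (co2 A) \<beta> \<alpha> = vc A \<alpha> \<beta>"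
  "hc (co2 A) = hc A" "id2 (co2 A) = id2 A"
  by (simp_all add: co2_def)

lemma hom_op2: "hom (op2 A) x y = hom A y x" by (auto simp: hom_def)
lemma hom_co2[simp]: "hom (co2 A) = hom A" by (auto simp: hom_def fun_eq_iff)
lemma cells_op2[simp]: "cells (op2 A) = cells A" by (auto simp: cells_def fun_eq_iff)
lemma cells_co2: "cells (co2 A) f g = cells A g f" by (auto simp: cells_def)

lemma co2_co2[simp]: "co2 (co2 A) = A" by (simp add: co2_def)
lemma co2_op2: "co2 (op2 A) = coop2 A" by (simp add: co2_def op2_def coop2_def)

context tc begin

lemma twocat_op2: "twocat (op2 A)"
  unfolding twocat_def hom_op2 cells_op2
  using interchange by (simp add: hom_def cells_def Ar_Ob)

lemma interchange_co: "\<alpha> \<in> Cl A \<Longrightarrow> \<alpha>' \<in> Cl A \<Longrightarrow> \<beta> \<in> Cl A \<Longrightarrow> \<beta>' \<in> Cl A \<Longrightarrow>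
  t2 A \<alpha>' = s2 A \<alpha> \<Longrightarrow> t2 A \<beta>' = s2 A \<beta> \<Longrightarrow> dm A (s2 A \<beta>) = cd A (s2 A \<alpha>) \<Longrightarrow>
  hc A (vc A \<beta> \<beta>') (vc A \<alpha> \<alpha>') = vc A (hc A \<beta> \<alpha>) (hc A \<beta>' \<alpha>')"
proof -
  assume a: "\<alpha> \<in> Cl A" "\<alpha>' \<in> Cl A" "\<beta> \<in> Cl A" "\<beta>' \<in> Cl A"
    "t2 A \<alpha>' = s2 A \<alpha>" "t2 A \<beta>' = s2 A \<beta>" "dm A (s2 A \<beta>) = cd A (s2 A \<alpha>)"
  have "dm A (s2 A \<beta>') = cd A (s2 A \<alpha>')" using a dm_t2[of \<beta>'] cd_t2[of \<alpha>'] by simp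
  then show ?thesis using a by (intro interchange) simp_all
qed

lemma twocat_co2: "twocat (co2 A)"
  unfolding twocat_def hom_co2
  using interchange_co by (simp add: hom_def cells_co2 cells_def Ar_Ob)

end


lemma adj_op: "is_adjunction A b e l p \<epsilon> \<eta> \<Longrightarrow> is_adjunction (op2 A) b e p l \<epsilon> \<eta>"
  unfolding is_adjunction_def by (simp add: hom_op2)
lemma adj_co: "is_adjunction A b e l p \<epsilon> \<eta> \<Longrightarrow> is_adjunction (co2 A) e b p l \<eta> \<epsilon>"
  unfolding is_adjunction_def by (simp add: cells_co2)
lemma adj_coop: "is_adjunction A b e l p \<epsilon> \<eta> \<Longrightarrow> is_adjunction (coop2 A) e b l p \<eta> \<epsilon>"
  unfolding is_adjunction_def coop2_def by (simp add: cells_co2 hom_op2)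

lemma ci_op:
  assumes ci: "cat_iso O1 H1 c1 i1 O2 H2 c2 i2 F G"
    and bs: "bij_betw \<sigma> O2 O3"
    and bt: "\<And>x x'. x \<in> O2 \<Longrightarrow> x' \<in> O2 \<Longrightarrow> bij_betw \<tau> (H2 x' x) (H3 (\<sigma> x) (\<sigma> x'))"
    and I: "\<And>x. x \<in> O2 \<Longrightarrow> i3 (\<sigma> x) = \<tau> (i2 x)"
    and Cm: "\<And>x x' x'' n n'. x \<in> O2 \<Longrightarrow> x' \<in> O2 \<Longrightarrow> x'' \<in> O2 \<Longrightarrow> n \<in> H2 x' x \<Longrightarrow> n' \<in> H2 x'' x' \<Longrightarrow>
        c3 (\<tau> n') (\<tau> n) = \<tau> (c2 n n')"
    and F': "\<And>x. F' x = \<sigma> (F x)" and G': "\<And>m. G' m = \<tau> (G m)"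
  shows "cat_iso O1 (\<lambda>x x'. H1 x' x) (\<lambda>m' m. c1 m m') i1 O3 H3 c3 i3 F' G'"
proof -
  have bF: "bij_betw F O1 O2" and bG: "\<And>x x'. x \<in> O1 \<Longrightarrow> x' \<in> O1 \<Longrightarrow> bij_betw G (H1 x x') (H2 (F x) (F x'))"
    and iG: "\<And>x. x \<in> O1 \<Longrightarrow> G (i1 x) = i2 (F x)"
    and cG: "\<And>x x' x'' m m'. x \<in> O1 \<Longrightarrow> x' \<in> O1 \<Longrightarrow> x'' \<in> O1 \<Longrightarrow> m \<in> H1 x x' \<Longrightarrow> m' \<in> H1 x' x'' \<Longrightarrow>
        G (c1 m' m) = c2 (G m') (G m)"
    using ci unfolding cat_iso_def by blast+
  have FO: "\<And>x. x \<in> O1 \<Longrightarrow> F x \<in> O2" using bF unfolding bij_betw_def by blast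
  have fF: "F' = \<sigma> \<circ> F" using F' by (simp add: fun_eq_iff)
  have fG: "G' = \<tau> \<circ> G" using G' by (simp add: fun_eq_iff)
  have 1: "bij_betw F' O1 O3" unfolding fF by (rule bij_betw_trans[OF bF bs])
  have 2: "bij_betw G' (H1 x' x) (H3 (F' x) (F' x'))" if "x \<in> O1" "x' \<in> O1" for x x'
    unfolding fG using bij_betw_trans[OF bG[OF that(2,1)] bt[OF FO[OF that(1)] FO[OF that(2)]]] by (simp add: F')
  have 3: "G' (i1 x) = i3 (F' x)" if "x \<in> O1" for x
    using that by (simp add: G' F' iG I FO)
  have 4: "G' (c1 m m') = c3 (G' m') (G' m)" if "x \<in> O1" "x' \<in> O1" "x'' \<in> O1" "m \<in> H1 x' x" "m' \<in> H1 x'' x'"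
    for x x' x'' m m'
  proof -
    have "G (c1 m m') = c2 (G m) (G m')" by (rule cG[OF that(3,2,1) that(5,4)])
    moreover have "G m \<in> H2 (F x') (F x)" "G m' \<in> H2 (F x'') (F x')"
      using bG[OF that(2,1)] bG[OF that(3,2)] that(4,5) unfolding bij_betw_def by blast+
    ultimately show ?thesis using Cm[OF FO[OF that(1)] FO[OF that(2)] FO[OF that(3)]] by (simp add: G')
  qed
  show ?thesis unfolding cat_iso_def using 1 2 3 4 by blast
qed

lemma bij_swap: "(\<And>a b. (a, b) \<in> T \<longleftrightarrow> (b, a) \<in> S) \<Longrightarrow> bij_betw (\<lambda>(a, b). (b, a)) S T"
  by (rule bij_betw_byWitness[where f'="\<lambda>(a, b). (b, a)"]) auto

lemma bij_swap3: "(\<And>a b c. (a, b, c) \<in> T \<longleftrightarrow> (b, a, c) \<in> S) \<Longrightarrow> bij_betw (\<lambda>(a, b, c). (b, a, c)) S T"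
  by (rule bij_betw_byWitness[where f'="\<lambda>(a, b, c). (b, a, c)"]) auto

definition swapK :: "('o, 'a, 'c) ckdiag \<Rightarrow> ('o, 'a, 'c) ckdiag" where
  "swapK K = K\<lparr>ck_d0 := ck_d1 K, ck_d1 := ck_d0 K, ck_D0 := ck_D2 K, ck_D2 := ck_D0 K\<rparr>"

lemma swapK_simps[simp]: "ck_C (swapK K) = ck_C K" "ck_d0 (swapK K) = ck_d1 K" "ck_d1 (swapK K) = ck_d0 K"
  "ck_al (swapK K) = ck_al K" "ck_P (swapK K) = ck_P K" "ck_D0 (swapK K) = ck_D2 K" "ck_D1 (swapK K) = ck_D1 K"
  "ck_D2 (swapK K) = ck_D0 K" "ck_s0 (swapK K) = ck_s0 K"
  by (simp_all add: swapK_def)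

lemma swapK_swapK[simp]: "swapK (swapK K) = K" by (simp add: swapK_def)

lemma cells_co2_fun: "cells (co2 B) = (\<lambda>x x'. cells B x' x)" by (simp add: fun_eq_iff cells_co2)
lemma vc_co2_fun: "vc (co2 B) = (\<lambda>m' m. vc B m m')" by (simp add: fun_eq_iff)

lemma desc_obj_co: "desc_obj (co2 B) p (swapK K) y = desc_obj B p K y"
  unfolding desc_obj_def by (simp add: cells_co2)

lemma desc_hom_co: "desc_hom (co2 B) (swapK K) = (\<lambda>x x'. desc_hom B K x' x)"
  unfolding desc_hom_def by (auto simp: fun_eq_iff cells_co2 split: prod.splits)

lemma desc_obj_co_fwd: "is_lax_descent_object B p K L d \<Psi> \<Longrightarrow> is_lax_descent_object (co2 B) p (swapK K) L d \<Psi>"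
  unfolding is_lax_descent_object_def
  apply (simp only: desc_obj_co desc_hom_co cells_co2_fun vc_co2_fun co2_simps hom_co2)
  apply (simp add: cells_co2)
  apply (intro ballI)
  apply (rule ci_op[where \<sigma>=id and \<tau>=id])
        apply (auto simp: bij_betw_def)
  done


lemma desc_fact_co: "is_lax_descent_factorization (co2 B) p (swapK K) L d \<Psi> pH \<longleftrightarrow> is_lax_descent_factorization B p K L d \<Psi> pH"
proof
  assume "is_lax_descent_factorization (co2 B) p (swapK K) L d \<Psi> pH"
  then show "is_lax_descent_factorization B p K L d \<Psi> pH"
    unfolding is_lax_descent_factorization_def using desc_obj_co_fwd[of "co2 B" p "swapK K" L d \<Psi>] by simp
next
  assume "is_lax_descent_factorization B p K L d \<Psi> pH"
  then show "is_lax_descent_factorization (co2 B) p (swapK K) L d \<Psi> pH"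
    unfolding is_lax_descent_factorization_def using desc_obj_co_fwd[of B p K L d \<Psi>] by simp
qed

lemma iso_co: "iso_factorizations (co2 B) = iso_factorizations B"
  by (simp add: fun_eq_iff iso_factorizations_def)

lemma oc_co: assumes H: "is_opcomma B p C d0 d1 al" shows "is_opcomma (co2 B) p C d1 d0 al"
proof -
  have a: "p \<in> Ar B" "C \<in> Ob B" "d0 \<in> hom B (cd B p) C" "d1 \<in> hom B (cd B p) C" "al \<in> cells B (cmp B d1 p) (cmp B d0 p)"
    and ci: "\<And>y. y \<in> Ob B \<Longrightarrow> cat_iso (hom B C y) (cells B) (vc B) (id2 B) (oc_obj B p y)
          (oc_hom B p) (pair_vc B) (\<lambda>(h0, h1, \<beta>). (id2 B h0, id2 B h1))
          (\<lambda>h. (cmp B h d0, cmp B h d1, hc B (id2 B h) al))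
          (\<lambda>\<xi>. (hc B \<xi> (id2 B d0), hc B \<xi> (id2 B d1)))"
    using H unfolding is_opcomma_def by auto
  have "cat_iso (hom B C y) (\<lambda>x x'. cells B x' x) (\<lambda>m' m. vc B m m') (id2 B) (oc_obj (co2 B) p y)
          (oc_hom (co2 B) p) (pair_vc (co2 B)) (\<lambda>(h0, h1, \<beta>). (id2 B h0, id2 B h1))
          (\<lambda>h. (cmp B h d1, cmp B h d0, hc B (id2 B h) al))
          (\<lambda>\<xi>. (hc B \<xi> (id2 B d1), hc B \<xi> (id2 B d0)))" if y: "y \<in> Ob B" for y
  proof (rule ci_op[OF ci[OF y], where \<sigma>="\<lambda>(a, b, c). (b, a, c)" and \<tau>="\<lambda>(a, b). (b, a)"])
    show "bij_betw (\<lambda>(a, b, c). (b, a, c)) (oc_obj B p y) (oc_obj (co2 B) p y)"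
      by (rule bij_swap3) (auto simp: oc_obj_def cells_co2)
    show "bij_betw (\<lambda>(a, b). (b, a)) (oc_hom B p x' x) (oc_hom (co2 B) p ((\<lambda>(a, b, c). (b, a, c)) x) ((\<lambda>(a, b, c). (b, a, c)) x'))"
      for x x' by (rule bij_swap) (auto simp: oc_hom_def cells_co2 split: prod.splits)
    show "(case (case x of (a, b, c) \<Rightarrow> (b, a, c)) of (h0, h1, \<beta>) \<Rightarrow> (id2 B h0, id2 B h1)) =
      (case (case x of (h0, h1, \<beta>) \<Rightarrow> (id2 B h0, id2 B h1)) of (a, b) \<Rightarrow> (b, a))" for x
      by (auto split: prod.splits)
    show "pair_vc (co2 B) (case n' of (a, b) \<Rightarrow> (b, a)) (case n of (a, b) \<Rightarrow> (b, a)) =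
       (case pair_vc B n n' of (a, b) \<Rightarrow> (b, a))" for n n'
      by (auto simp: pair_vc_def split: prod.splits)
  qed auto
  then show ?thesis unfolding is_opcomma_def using a by (simp add: cells_co2_fun vc_co2_fun cells_co2)
qed

lemma po_co: assumes H: "is_pushout2 B d0 d1 P D2 D0" shows "is_pushout2 (co2 B) d1 d0 P D0 D2"
proof -
  have a: "d0 \<in> Ar B" "d1 \<in> Ar B" "dm B d0 = dm B d1" "P \<in> Ob B" "D2 \<in> hom B (cd B d0) P" "D0 \<in> hom B (cd B d1) P"
     "cmp B D2 d0 = cmp B D0 d1"
    and ci: "\<And>y. y \<in> Ob B \<Longrightarrow> cat_iso (hom B P y) (cells B) (vc B) (id2 B) (po_obj B d0 d1 y)
          (po_hom B d0 d1) (pair_vc B) (\<lambda>(k0, k1). (id2 B k0, id2 B k1))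
          (\<lambda>k. (cmp B k D2, cmp B k D0))
          (\<lambda>\<xi>. (hc B \<xi> (id2 B D2), hc B \<xi> (id2 B D0)))"
    using H unfolding is_pushout2_def by auto
  have "cat_iso (hom B P y) (\<lambda>x x'. cells B x' x) (\<lambda>m' m. vc B m m') (id2 B) (po_obj (co2 B) d1 d0 y)
          (po_hom (co2 B) d1 d0) (pair_vc (co2 B)) (\<lambda>(k0, k1). (id2 B k0, id2 B k1))
          (\<lambda>k. (cmp B k D0, cmp B k D2))
          (\<lambda>\<xi>. (hc B \<xi> (id2 B D0), hc B \<xi> (id2 B D2)))" if y: "y \<in> Ob B" for y
  proof (rule ci_op[OF ci[OF y], where \<sigma>="\<lambda>(a, b). (b, a)" and \<tau>="\<lambda>(a, b). (b, a)"])
    show "bij_betw (\<lambda>(a, b). (b, a)) (po_obj B d0 d1 y) (po_obj (co2 B) d1 d0 y)"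
      by (rule bij_swap) (auto simp: po_obj_def)
    show "bij_betw (\<lambda>(a, b). (b, a)) (po_hom B d0 d1 x' x) (po_hom (co2 B) d1 d0 ((\<lambda>(a, b). (b, a)) x) ((\<lambda>(a, b). (b, a)) x'))"
      for x x' by (rule bij_swap) (auto simp: po_hom_def cells_co2 split: prod.splits)
    show "(case (case x of (a, b) \<Rightarrow> (b, a)) of (k0, k1) \<Rightarrow> (id2 B k0, id2 B k1)) =
      (case (case x of (k0, k1) \<Rightarrow> (id2 B k0, id2 B k1)) of (a, b) \<Rightarrow> (b, a))" for x
      by (auto split: prod.splits)
    show "pair_vc (co2 B) (case n' of (a, b) \<Rightarrow> (b, a)) (case n of (a, b) \<Rightarrow> (b, a)) =
       (case pair_vc B n n' of (a, b) \<Rightarrow> (b, a))" for n n'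
      by (auto simp: pair_vc_def split: prod.splits)
  qed auto
  then show ?thesis unfolding is_pushout2_def using a by (simp add: cells_co2_fun vc_co2_fun)
qed

lemma ck_co: "is_cokernel_diagram B p K \<Longrightarrow> is_cokernel_diagram (co2 B) p (swapK K)"
  unfolding is_cokernel_diagram_def
  using oc_co po_co by (auto simp: cells_co2)


lemma agree_co: "desc_EM_agree (co2 B) Bm l p \<epsilon> \<eta> (swapK K) = desc_EM_agree B Bm l p \<epsilon> \<eta> K"
  unfolding desc_EM_agree_def desc_fact_co iso_co ..

theorem theorem4p11:
  fixes A :: "('o, 'a, 'c) twocat"
    and b e :: 'o and l p :: 'a and \<epsilon> \<eta> :: 'c
    and K1 K2 K3 K4 :: "('o, 'a, 'c) ckdiag"
  assumes "twocat A"
    and "is_adjunction A b e l p \<epsilon> \<eta>"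
  shows "(is_cokernel_diagram A p K1 \<longrightarrow> desc_EM_agree A A l p \<epsilon> \<eta> K1)
       \<and> (is_cokernel_diagram (op2 A) l K2 \<longrightarrow> desc_EM_agree (op2 A) (op2 A) p l \<epsilon> \<eta> K2)
       \<and> (is_cokernel_diagram A l K3 \<longrightarrow> desc_EM_agree A (co2 A) p l \<eta> \<epsilon> K3)
       \<and> (is_cokernel_diagram (op2 A) p K4 \<longrightarrow> desc_EM_agree (op2 A) (coop2 A) l p \<eta> \<epsilon> K4)"
proof -
  interpret tA: tc A by unfold_locales (rule assms(1))
  interpret tO: tc "op2 A" by unfold_locales (rule tA.twocat_op2)
  interpret tC: tc "co2 A" by unfold_locales (rule tA.twocat_co2)
  interpret tCO: tc "coop2 A" unfolding coop2_def by unfold_locales (rule tC.twocat_op2)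
  have 1: "is_cokernel_diagram A p K1 \<longrightarrow> desc_EM_agree A A l p \<epsilon> \<eta> K1"
    using tA.part1_ex[OF assms(2)] by blast
  have 2: "is_cokernel_diagram (op2 A) l K2 \<longrightarrow> desc_EM_agree (op2 A) (op2 A) p l \<epsilon> \<eta> K2"
    using tO.part1_ex[OF adj_op[OF assms(2)]] by blast
  have 3: "is_cokernel_diagram A l K3 \<longrightarrow> desc_EM_agree A (co2 A) p l \<eta> \<epsilon> K3"
  proof
    assume "is_cokernel_diagram A l K3"
    then have "is_cokernel_diagram (co2 A) l (swapK K3)" by (rule ck_co)
    then have "desc_EM_agree (co2 A) (co2 A) p l \<eta> \<epsilon> (swapK K3)"
      by (rule tC.part1_ex[OF adj_co[OF assms(2)]])
    then show "desc_EM_agree A (co2 A) p l \<eta> \<epsilon> K3" by (simp only: agree_co)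
  qed
  have 4: "is_cokernel_diagram (op2 A) p K4 \<longrightarrow> desc_EM_agree (op2 A) (coop2 A) l p \<eta> \<epsilon> K4"
  proof
    assume "is_cokernel_diagram (op2 A) p K4"
    then have "is_cokernel_diagram (co2 (op2 A)) p (swapK K4)" by (rule ck_co)
    then have "is_cokernel_diagram (coop2 A) p (swapK K4)" by (simp only: co2_op2)
    then have "desc_EM_agree (coop2 A) (coop2 A) l p \<eta> \<epsilon> (swapK K4)"
      by (rule tCO.part1_ex[OF adj_coop[OF assms(2)]])
    then have "desc_EM_agree (co2 (op2 A)) (coop2 A) l p \<eta> \<epsilon> (swapK K4)" by (simp only: co2_op2)
    then show "desc_EM_agree (op2 A) (coop2 A) l p \<eta> \<epsilon> K4" by (simp only: agree_co)
  qed
  show ?thesis using 1 2 3 4 by blast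
qed


end
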